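(* Fix $j\in\{1,\ldots,d\}$ and an American option $\xi$. For each $t$ and $\mu\in\Omega_t$ let $U^{\mathrm{ad}\mu}_t,V^{\mathrm{ad}\mu}_t,W^{\mathrm{ad}\mu}_t,Z^{\mathrm{ad}\mu}_t$ be the support functions of $-\mathcal{U}^{\mathrm{ad}\mu}_t,-\mathcal{V}^{\mathrm{ad}\mu}_t,-\mathcal{W}^{\mathrm{ad}\mu}_t,-\mathcal{Z}^{\mathrm{ad}\mu}_t$. Then: (1) For each $t=0,\ldots,T$ and $\mu\in\Omega_t$, the cone $(\mathcal{Q}^\mu_t)^\ast$ is compactly $j$-generated. (2) For all $t=0,\ldots,T$, $\mu\in\Omega_t$ and $y\in\mathbb{R}^d$: $U^{\mathrm{ad}\mu}_t(y)=-y\cdot\xi_t(\mu)$ if $y\in(\mathcal{Q}^\mu_t)^\ast$ and $=\infty$ otherwise; $V^{\mathrm{ad}\mu}_t(y)=W^{\mathrm{ad}\mu}_t(y)$ if $y\in(\mathcal{Q}^\mu_t)^\ast$ and $=\infty$ otherwise. (3) $\mathrm{dom}\,Z^{\mathrm{ad}\mu}_t=(\mathcal{Q}^\mu_t)^\ast$ for all $t=0,\ldots,T$ and $\mu\in\Omega_t$. For all $t=0,\ldots,T-1$ and $\mu\in\Omega_t$, $Z^{\mathrm{ad}\mu}_t=\mathrm{conv}\{U^{\mathrm{ad}\mu}_t,V^{\mathrm{ad}\mu}_t\}$, and for each $y\in\sigma_j((\mathcal{Q}^\mu_t)^\ast)$ there exist $\lambda\in[0,1]$, $x\in\sigma_j(\mathrm{dom}\,V^{\mathrm{ad}\mu}_t)$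 and $s\in\sigma_j((\mathcal{Q}^\mu_t)^\ast)$ with $Z^{\mathrm{ad}\mu}_t(y)=\lambda U^{\mathrm{ad}\mu}_t(s)+(1-\lambda)V^{\mathrm{ad}\mu}_t(x)$ and $y=\lambda s+(1-\lambda)x$. (4) For all $t=0,\ldots,T-1$ and $\mu\in\Omega_t$, $W^{\mathrm{ad}\mu}_t=\mathrm{conv}\{Z^{\mathrm{ad}\nu}_{t+1}:\nu\in\mathrm{succ}\,\mu\}$, and for each $x\in\sigma_j(\mathrm{dom}\,W^{\mathrm{ad}\mu}_t)$ there exist $q^\nu\in[0,1]$ and $y^\nu\in\sigma_j((\mathcal{Q}^\nu_{t+1})^\ast)$ for $\nu\in\mathrm{succ}\,\mu$ with $W^{\mathrm{ad}\mu}_t(x)=\sum_{\nu}q^\nu Z^{\mathrm{ad}\nu}_{t+1}(y^\nu)$, $x=\sum_\nu q^\nu y^\nu$ and $\sum_\nu q^\nu=1$.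
   Context: Finite filtered probability space $(\Omega,\mathcal{F},\mathbb{P};(\mathcal{F}_t)_{t=0}^T)$, $\mathcal{F}_0$ trivial, $\mathcal{F}_T=2^\Omega$, $\mathbb{P}(\{\omega\})>0$. $\Omega_t$: atoms (nodes) of $\mathcal{F}_t$; $\mathrm{succ}\,\mu=\{\nu\in\Omega_{t+1}:\nu\subseteq\mu\}$. $\mathcal{L}_t$: $\mathcal{F}_t$-measurable $\mathbb{R}^d$-valued random variables. $d$ assets, $\mathcal{F}_t$-measurable exchange rates $\pi^{jk}_t>0$, $\pi^{jj}_t=1$. $\mathcal{K}^\mu_t$: convex cone generated by $e^1,\ldots,e^d$ and $\pi^{jk}_t(\mu)e^j-e^k$; $\mathcal{K}_t=\{x\in\mathcal{L}_t:x(\mu)\in\mathcal{K}^\mu_t\ \forall\mu\}$. Deferred solvency cone $\mathcal{Q}_t$: $z\in\mathcal{L}_t$ for which there exist $y_{t+1},\ldots,y_{T+1}$, $y_s\in\mathcal{L}_{s-1}$, $y_{T+1}=0$, with $z-y_{t+1}\in\mathcal{K}_t$, $y_s-y_{s+1}\in\mathcal{K}_s$ ($s>t$); $\mathcal{Q}^\mu_t=\{z(\mu):z\in\mathcal{Q}_t\}$. American option: adapted $\mathbb{R}^d$-valued $\xi=(\xi_t)_{t=0}^T$. Construction (nodewise): $\mathcal{U}^{\mathrm{ad}\mu}_t=\xi_t(\mu)+\mathcal{Q}^\mu_t$; at $T$: $\mathcal{Z}^{\mathrm{ad}\mu}_T=\mathcal{V}^{\mathrm{ad}\mu}_T=\mathcal{W}^{\mathrm{ad}\mu}_T=\mathcal{U}^{\mathrm{ad}\mu}_T$;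 for $t<T$: $\mathcal{W}^{\mathrm{ad}\mu}_t=\bigcap_{\nu\in\mathrm{succ}\,\mu}\mathcal{Z}^{\mathrm{ad}\nu}_{t+1}$, $\mathcal{V}^{\mathrm{ad}\mu}_t=\mathcal{W}^{\mathrm{ad}\mu}_t+\mathcal{Q}^\mu_t$, $\mathcal{Z}^{\mathrm{ad}\mu}_t=\mathcal{U}^{\mathrm{ad}\mu}_t\cap\mathcal{V}^{\mathrm{ad}\mu}_t$. Convex analysis notation: for a cone $A$, $A^\ast=\{y:y\cdot x\ge0\ \forall x\in A\}$. The support function of a convex set $A$ is $\delta^\ast_A(x)=\sup\{x\cdot y:y\in A\}$. The effective domain of $f:\mathbb{R}^d\to\mathbb{R}\cup\{\infty\}$ is $\mathrm{dom}\,f=\{y:f(y)<\infty\}$. The convex hull of convex functions $f_1,\ldots,f_n$ is $f(x)=\inf\{\sum_i\lambda_if_i(x_i):\lambda_i\in[0,1],\sum_i\lambda_i=1,\sum_i\lambda_ix_i=x\}$. $\sigma_j(A)=\{x\in A:x^j=1\}$; a cone $A$ is compactly $j$-generated if $\sigma_j(A)$ is compact, non-empty and generates $A$ (i.e. $A=\{\lambda x:\lambda\ge0,x\in\sigma_j(A)\}$). Standing assumption: no arbitrage (no predictable $y$ with $y_0=0$, $y_{T+1}=0$, $y_t-y_{t+1}\in\mathcal{K}_t$ for $t<T$ and $y_T-x\in\mathcal{K}_T$ for a nonzero componentwise non-negative $x\in\mathcal{L}_T$). *)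

theory Defs
  imports "HOL-Analysis.Analysis" "HOL-Library.Disjoint_Sets"
begin

text \<open>Finite filtration given by its atoms: F t is the set of atoms (nodes) of the
  sigma-algebra at time t, for t = 0..T, on the finite sample space Om.\<close>

definition filtration :: "'w set \<Rightarrow> (nat \<Rightarrow> 'w set set) \<Rightarrow> nat \<Rightarrow> bool" where
  "filtration Om F T \<longleftrightarrow> finite Om
     \<and> (\<forall>t\<le>T. partition_on Om (F t))
     \<and> F 0 = {Om}
     \<and> F T = (\<lambda>w. {w}) ` Om
     \<and> (\<forall>t<T. \<forall>\<nu>\<in>F (Suc t). \<exists>\<mu>\<in>F t. \<nu> \<subseteq> \<mu>)"

definition succ :: "(nat \<Rightarrow> 'w set set) \<Rightarrow> nat \<Rightarrow> 'w set \<Rightarrow> 'w set set" where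
  "succ F t \<mu> = {\<nu> \<in> F (Suc t). \<nu> \<subseteq> \<mu>}"

definition adapted :: "(nat \<Rightarrow> 'w set set) \<Rightarrow> nat \<Rightarrow> ('w \<Rightarrow> 'a) \<Rightarrow> bool" where
  "adapted F t X \<longleftrightarrow> (\<forall>\<mu>\<in>F t. \<forall>w\<in>\<mu>. \<forall>w'\<in>\<mu>. X w = X w')"

definition atnode :: "('w \<Rightarrow> 'a) \<Rightarrow> 'w set \<Rightarrow> 'a" where
  "atnode X \<mu> = X (SOME w. w \<in> \<mu>)"

definition exchange_rates :: "'w set \<Rightarrow> (nat \<Rightarrow> 'w set set) \<Rightarrow> nat
      \<Rightarrow> (nat \<Rightarrow> 'w \<Rightarrow> 'd::finite \<Rightarrow> 'd \<Rightarrow> real) \<Rightarrow> bool" where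
  "exchange_rates Om F T rate \<longleftrightarrow> (\<forall>t\<le>T. adapted F t (rate t)
      \<and> (\<forall>w\<in>Om. \<forall>j k. rate t w j k > 0) \<and> (\<forall>w\<in>Om. \<forall>k. rate t w k k = 1))"

definition Kcone :: "(nat \<Rightarrow> 'w \<Rightarrow> 'd::finite \<Rightarrow> 'd \<Rightarrow> real) \<Rightarrow> nat \<Rightarrow> 'w \<Rightarrow> (real^'d) set" where
  "Kcone rate t w = convex_cone hull
     (range (\<lambda>k. axis k 1) \<union> {rate t w j k *\<^sub>R axis j 1 - axis k 1 | j k. True})"

definition Qset :: "'w set \<Rightarrow> (nat \<Rightarrow> 'w set set) \<Rightarrow> nat
      \<Rightarrow> (nat \<Rightarrow> 'w \<Rightarrow> 'd::finite \<Rightarrow> 'd \<Rightarrow> real) \<Rightarrow> nat \<Rightarrow> ('w \<Rightarrow> real^'d) set" where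
  "Qset Om F T rate t = {z. adapted F t z \<and>
     (\<exists>y :: nat \<Rightarrow> 'w \<Rightarrow> real^'d.
        (\<forall>s\<in>{t+1..T+1}. adapted F (s - 1) (y s))
      \<and> (\<forall>w\<in>Om. y (T+1) w = 0)
      \<and> (\<forall>w\<in>Om. z w - y (t+1) w \<in> Kcone rate t w)
      \<and> (\<forall>s\<in>{t+1..T}. \<forall>w\<in>Om. y s w - y (s+1) w \<in> Kcone rate s w))}"

definition Qnode :: "'w set \<Rightarrow> (nat \<Rightarrow> 'w set set) \<Rightarrow> nat
      \<Rightarrow> (nat \<Rightarrow> 'w \<Rightarrow> 'd::finite \<Rightarrow> 'd \<Rightarrow> real) \<Rightarrow> nat \<Rightarrow> 'w set \<Rightarrow> (real^'d) set" where
  "Qnode Om F T rate t \<mu> = {v. \<exists>z\<in>Qset Om F T rate t. \<forall>w\<in>\<mu>. z w = v}"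

definition no_arbitrage :: "'w set \<Rightarrow> (nat \<Rightarrow> 'w set set) \<Rightarrow> nat
      \<Rightarrow> (nat \<Rightarrow> 'w \<Rightarrow> 'd::finite \<Rightarrow> 'd \<Rightarrow> real) \<Rightarrow> bool" where
  "no_arbitrage Om F T rate \<longleftrightarrow> \<not> (\<exists>(y :: nat \<Rightarrow> 'w \<Rightarrow> real^'d) (x :: 'w \<Rightarrow> real^'d).
        (\<forall>w\<in>Om. y 0 w = 0)
      \<and> (\<forall>s\<in>{1..T+1}. adapted F (s - 1) (y s))
      \<and> (\<forall>w\<in>Om. y (T+1) w = 0)
      \<and> (\<forall>t<T. \<forall>w\<in>Om. y t w - y (t+1) w \<in> Kcone rate t w)
      \<and> (\<forall>w\<in>Om. y T w - x w \<in> Kcone rate T w)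
      \<and> adapted F T x
      \<and> (\<forall>w\<in>Om. \<forall>k. 0 \<le> x w $ k)
      \<and> (\<exists>w\<in>Om. x w \<noteq> 0))"

definition american_option :: "(nat \<Rightarrow> 'w set set) \<Rightarrow> nat \<Rightarrow> (nat \<Rightarrow> 'w \<Rightarrow> real^'d) \<Rightarrow> bool" where
  "american_option F T xi \<longleftrightarrow> (\<forall>t\<le>T. adapted F t (xi t))"

definition Uad :: "'w set \<Rightarrow> (nat \<Rightarrow> 'w set set) \<Rightarrow> nat
      \<Rightarrow> (nat \<Rightarrow> 'w \<Rightarrow> 'd::finite \<Rightarrow> 'd \<Rightarrow> real) \<Rightarrow> (nat \<Rightarrow> 'w \<Rightarrow> real^'d)
      \<Rightarrow> nat \<Rightarrow> 'w set \<Rightarrow> (real^'d) set" where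
  "Uad Om F T rate xi t \<mu> = (\<lambda>q. atnode (xi t) \<mu> + q) ` Qnode Om F T rate t \<mu>"

text \<open>Zrec n mu = Z^{ad mu}_{T-n}, by backward recursion.\<close>
primrec Zrec :: "'w set \<Rightarrow> (nat \<Rightarrow> 'w set set) \<Rightarrow> nat
      \<Rightarrow> (nat \<Rightarrow> 'w \<Rightarrow> 'd::finite \<Rightarrow> 'd \<Rightarrow> real) \<Rightarrow> (nat \<Rightarrow> 'w \<Rightarrow> real^'d)
      \<Rightarrow> nat \<Rightarrow> 'w set \<Rightarrow> (real^'d) set" where
  "Zrec Om F T rate xi 0 \<mu> = Uad Om F T rate xi T \<mu>"
| "Zrec Om F T rate xi (Suc n) \<mu> =
     Uad Om F T rate xi (T - Suc n) \<mu> \<inter>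
     {w + q | w q. w \<in> (\<Inter>\<nu>\<in>succ F (T - Suc n) \<mu>. Zrec Om F T rate xi n \<nu>)
                 \<and> q \<in> Qnode Om F T rate (T - Suc n) \<mu>}"

definition Zad where
  "Zad Om F T rate xi t \<mu> = Zrec Om F T rate xi (T - t) \<mu>"

definition Wad where
  "Wad Om F T rate xi t \<mu> = (if t < T then (\<Inter>\<nu>\<in>succ F t \<mu>. Zad Om F T rate xi (Suc t) \<nu>)
                            else Uad Om F T rate xi t \<mu>)"

definition Vad where
  "Vad Om F T rate xi t \<mu> = (if t < T then {w + q | w q. w \<in> Wad Om F T rate xi t \<mu> \<and> q \<in> Qnode Om F T rate t \<mu>}
                            else Uad Om F T rate xi t \<mu>)"

definition dual_cone :: "(real^'d) set \<Rightarrow> (real^'d) set" where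
  "dual_cone A = {y. \<forall>x\<in>A. 0 \<le> y \<bullet> x}"

definition support_fun :: "(real^'d) set \<Rightarrow> real^'d \<Rightarrow> ereal" where
  "support_fun A x = (SUP y\<in>A. ereal (x \<bullet> y))"

definition edom :: "(real^'d \<Rightarrow> ereal) \<Rightarrow> (real^'d) set" where
  "edom f = {y. f y < \<infinity>}"

text \<open>Convex hull of the finite family f i, i in I (Isabelle convention 0 * \<infinity> = 0).\<close>
definition conv_fun :: "'i set \<Rightarrow> ('i \<Rightarrow> real^'d \<Rightarrow> ereal) \<Rightarrow> real^'d \<Rightarrow> ereal" where
  "conv_fun I f x = (INF p \<in> {(l, xs). (\<forall>i\<in>I. 0 \<le> l i \<and> l i \<le> 1) \<and> sum l I = 1
                                  \<and> (\<Sum>i\<in>I. l i *\<^sub>R xs i) = x}.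
                       (\<Sum>i\<in>I. ereal (fst p i) * f i (snd p i)))"

definition sigma_j :: "'d \<Rightarrow> (real^'d) set \<Rightarrow> (real^'d) set" where
  "sigma_j j A = {x\<in>A. x $ j = 1}"

definition compactly_generated :: "'d \<Rightarrow> (real^'d) set \<Rightarrow> bool" where
  "compactly_generated j A \<longleftrightarrow> compact (sigma_j j A) \<and> sigma_j j A \<noteq> {}
      \<and> A = {c *\<^sub>R x | c x. 0 \<le> c \<and> x \<in> sigma_j j A}"

definition Ufun where "Ufun Om F T rate xi t \<mu> = support_fun (uminus ` Uad Om F T rate xi t \<mu>)"
definition Vfun where "Vfun Om F T rate xi t \<mu> = support_fun (uminus ` Vad Om F T rate xi t \<mu>)"
definition Wfun where "Wfun Om F T rate xi t \<mu> = support_fun (uminus ` Wad Om F T rate xi t \<mu>)"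
definition Zfun where "Zfun Om F T rate xi t \<mu> = support_fun (uminus ` Zad Om F T rate xi t \<mu>)"

end

theory Submission
  imports Defs
begin

definition dualc :: "'a::euclidean_space set \<Rightarrow> 'a set" where
  "dualc C = {y. \<forall>x\<in>C. 0 \<le> y \<bullet> x}"

definition fgc :: "'a::euclidean_space set \<Rightarrow> bool" where
  "fgc C \<longleftrightarrow> (\<exists>G. finite G \<and> C = convex_cone hull G)"

definition msum :: "'a::euclidean_space set \<Rightarrow> 'a set \<Rightarrow> 'a set" where
  "msum A B = {a + b | a b. a \<in> A \<and> b \<in> B}"

definition fsum :: "'i set \<Rightarrow> ('i \<Rightarrow> 'a::euclidean_space set) \<Rightarrow> 'a set" where
  "fsum I C = {(\<Sum>i\<in>I. x i) | x. \<forall>i\<in>I. x i \<in> C i}"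

lemma fgc_convex_cone: "fgc C \<Longrightarrow> convex_cone C"
  unfolding fgc_def using convex_cone_convex_cone_hull by blast

lemma fgc_closed: "fgc C \<Longrightarrow> closed C"
  unfolding fgc_def using closed_convex_cone_hull by blast

lemma dualc_convex_cone: "convex_cone (dualc C)"
  unfolding convex_cone_iff dualc_def by (auto simp: inner_left_distrib)

lemma dualc_closed: "closed (dualc C)"
proof -
  have "dualc C = (\<Inter>x\<in>C. {y. 0 \<le> y \<bullet> x})" unfolding dualc_def by auto
  moreover have "closed {y. 0 \<le> y \<bullet> x}" for x :: 'a
    by (intro closed_Collect_le continuous_intros)
  ultimately show ?thesis by (auto intro!: closed_INT)
qed

lemma cone_scale: "convex_cone C \<Longrightarrow> x \<in> C \<Longrightarrow> 0 \<le> c \<Longrightarrow> c *\<^sub>R x \<in> C"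
  by (simp add: convex_cone_iff)

lemma cone_add: "convex_cone C \<Longrightarrow> x \<in> C \<Longrightarrow> y \<in> C \<Longrightarrow> x + y \<in> C"
  by (simp add: convex_cone_iff)

lemma cone_0: "convex_cone C \<Longrightarrow> 0 \<in> C"
  by (simp add: convex_cone_iff)

lemma farkas:
  assumes "convex_cone C" "closed C" "x \<notin> C"
  shows "\<exists>y\<in>dualc C. y \<bullet> x < 0"
proof -
  obtain a b where ab: "a \<bullet> x < b" "\<forall>c\<in>C. a \<bullet> c > b"
    using separating_hyperplane_closed_point[of C x] assms by (auto simp: convex_cone_def)
  have "b < a \<bullet> 0" using ab(2) cone_0[OF assms(1)] by blast
  then have b0: "b < 0" by simp
  have "0 \<le> a \<bullet> c" if "c \<in> C" for c
  proof (rule ccontr)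
    assume "\<not> 0 \<le> a \<bullet> c"
    then have neg: "a \<bullet> c < 0" by simp
    define t where "t = b / (a \<bullet> c)"
    have "t \<ge> 0" using b0 neg by (simp add: t_def divide_nonpos_neg)
    then have "t *\<^sub>R c \<in> C" using cone_scale[OF assms(1) that] by blast
    then have "a \<bullet> (t *\<^sub>R c) > b" using ab(2) by blast
    moreover have "a \<bullet> (t *\<^sub>R c) = b" using neg by (simp add: t_def)
    ultimately show False by simp
  qed
  then have "a \<in> dualc C" by (simp add: dualc_def)
  then show ?thesis using ab(1) b0 by (intro bexI[of _ a]) auto
qed

lemma bipolar:
  assumes "convex_cone C" "closed C"
  shows "dualc (dualc C) = C"
proof
  show "C \<subseteq> dualc (dualc C)"
  proof
    fix x assume x: "x \<in> C"
    have "0 \<le> x \<bullet> y" if "y \<in> dualc C" for y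
    proof -
      have "0 \<le> y \<bullet> x" using that x unfolding dualc_def by blast
      then show ?thesis by (simp add: inner_commute)
    qed
    then show "x \<in> dualc (dualc C)" unfolding dualc_def by blast
  qed
  show "dualc (dualc C) \<subseteq> C"
  proof
    fix x assume x: "x \<in> dualc (dualc C)"
    show "x \<in> C"
    proof (rule ccontr)
      assume "x \<notin> C"
      then obtain y where y: "y \<in> dualc C" "y \<bullet> x < 0" using farkas assms by blast
      have "0 \<le> x \<bullet> y" using x y(1) unfolding dualc_def by blast
      then show False using y(2) by (simp add: inner_commute)
    qed
  qed
qed

lemma cone_halfspace_le0:
  assumes "convex_cone C" "C \<subseteq> {x. a \<bullet> x \<le> b}" "x \<in> C"
  shows "a \<bullet> x \<le> 0"
proof (rule ccontr)
  assume "\<not> a \<bullet> x \<le> 0"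
  then have pos: "a \<bullet> x > 0" by simp
  have "0 \<in> C" using assms(1) cone_0 by blast
  then have "a \<bullet> 0 \<le> b" using assms(2) by blast
  then have b0: "0 \<le> b" by simp
  define t where "t = (b + 1) / (a \<bullet> x)"
  have "t \<ge> 0" using b0 pos by (simp add: t_def)
  then have "t *\<^sub>R x \<in> C" using cone_scale assms by blast
  then have "a \<bullet> (t *\<^sub>R x) \<le> b" using assms(2) by blast
  moreover have "a \<bullet> (t *\<^sub>R x) = b + 1" using pos by (simp add: t_def)
  ultimately show False by simp
qed

lemma fgc_dual:
  assumes "fgc C" shows "fgc (dualc C)"
proof -
  have cc: "convex_cone C" using assms fgc_convex_cone by blast
  obtain G where G: "finite G" "C = convex_cone hull G" using assms fgc_def by blast
  have "polyhedron C" using G polyhedron_convex_cone_hull by blast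
  then obtain F where F: "finite F" "C = \<Inter>F" "\<forall>h\<in>F. \<exists>a b. a \<noteq> 0 \<and> h = {x. a \<bullet> x \<le> b}"
    unfolding polyhedron_def by blast
  define av :: "'a set \<Rightarrow> 'a" where "av h = (SOME a. \<exists>b. a \<noteq> 0 \<and> h = {x. a \<bullet> x \<le> (b::real)})" for h
  define bv :: "'a set \<Rightarrow> real" where "bv h = (SOME b. h = {x. av h \<bullet> x \<le> (b::real)})" for h
  have hav: "h = {x. av h \<bullet> x \<le> bv h}" if "h \<in> F" for h
  proof -
    have ex: "\<exists>a. \<exists>b. a \<noteq> 0 \<and> h = {x. a \<bullet> x \<le> (b::real)}" using F(3) that by blast
    have "\<exists>b. av h \<noteq> 0 \<and> h = {x. av h \<bullet> x \<le> b}" unfolding av_def by (rule someI_ex[OF ex])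
    then obtain b where "h = {x. av h \<bullet> x \<le> b}" by blast
    then show ?thesis unfolding bv_def by (rule someI)
  qed
  define D where "D = convex_cone hull ((\<lambda>h. - av h) ` F)"
  have "dualc C = D"
  proof
    show "D \<subseteq> dualc C" unfolding D_def
    proof (rule hull_minimal)
      show "(\<lambda>h. - av h) ` F \<subseteq> dualc C"
      proof
        fix z assume "z \<in> (\<lambda>h. - av h) ` F"
        then obtain h where h: "h \<in> F" "z = - av h" by blast
        have "C \<subseteq> {x. av h \<bullet> x \<le> bv h}" using hav[OF h(1)] F(2) h(1) by blast
        then show "z \<in> dualc C" using cone_halfspace_le0[OF cc] h by (auto simp: dualc_def)
      qed
      show "convex_cone (dualc C)" by (rule dualc_convex_cone)
    qed
    show "dualc C \<subseteq> D"
    proof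
      fix y assume y: "y \<in> dualc C"
      show "y \<in> D"
      proof (rule ccontr)
        assume "y \<notin> D"
        moreover have "convex_cone D" unfolding D_def by (rule convex_cone_convex_cone_hull)
        moreover have "closed D" unfolding D_def by (intro closed_convex_cone_hull finite_imageI F(1))
        ultimately obtain z where z: "z \<in> dualc D" "z \<bullet> y < 0" using farkas by blast
        have "z \<in> C"
        proof -
          have "z \<in> h" if h: "h \<in> F" for h
          proof -
            have "- av h \<in> D" unfolding D_def using h by (simp add: hull_inc)
            then have "0 \<le> z \<bullet> (- av h)" using z(1) by (auto simp: dualc_def)
            have "0 \<in> h" using cone_0[OF cc] F(2) h by blast
            then have "0 \<le> bv h" using hav[OF h] by (metis inner_zero_right mem_Collect_eq)
            then have "av h \<bullet> z \<le> bv h" using \<open>0 \<le> z \<bullet> (- av h)\<close>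
              by (simp add: inner_commute)
            then show "z \<in> h" using hav[OF h] by blast
          qed
          then show ?thesis using F(2) by blast
        qed
        then have "0 \<le> y \<bullet> z" using y unfolding dualc_def by blast
        then show False using z(2) by (simp add: inner_commute)
      qed
    qed
  qed
  then show ?thesis unfolding fgc_def D_def using F(1) by blast
qed

lemma fgc_msum:
  assumes "fgc A" "fgc B" shows "fgc (msum A B)"
proof -
  obtain G where G: "finite G" "A = convex_cone hull G" using assms fgc_def by blast
  obtain G' where G': "finite G'" "B = convex_cone hull G'" using assms fgc_def by blast
  have "convex_cone hull (G \<union> G') = msum A B"
    unfolding convex_cone_hull_Un msum_def G G' by blast
  then show ?thesis unfolding fgc_def using G G' by (metis finite_UnI)
qed

lemma fsum_empty: "fsum {} C = {0}"
  unfolding fsum_def by auto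

lemma fsum_insert:
  assumes "finite I" "i \<notin> I"
  shows "fsum (insert i I) C = msum (C i) (fsum I C)"
proof
  show "fsum (insert i I) C \<subseteq> msum (C i) (fsum I C)"
  proof
    fix z assume "z \<in> fsum (insert i I) C"
    then obtain x where x: "z = (\<Sum>k\<in>insert i I. x k)" "\<forall>k\<in>insert i I. x k \<in> C k"
      unfolding fsum_def by blast
    have "z = x i + (\<Sum>k\<in>I. x k)" using x(1) assms by simp
    moreover have "(\<Sum>k\<in>I. x k) \<in> fsum I C" using x(2) unfolding fsum_def by blast
    ultimately show "z \<in> msum (C i) (fsum I C)" using x(2) unfolding msum_def by blast
  qed
  show "msum (C i) (fsum I C) \<subseteq> fsum (insert i I) C"
  proof
    fix z assume "z \<in> msum (C i) (fsum I C)"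
    then obtain a x where ax: "z = a + (\<Sum>k\<in>I. x k)" "a \<in> C i" "\<forall>k\<in>I. x k \<in> C k"
      unfolding msum_def fsum_def by blast
    define x' where "x' = x(i := a)"
    have "(\<Sum>k\<in>I. x' k) = (\<Sum>k\<in>I. x k)" unfolding x'_def
      by (rule sum.cong) (use assms in auto)
    then have "z = (\<Sum>k\<in>insert i I. x' k)" using ax(1) assms by (simp add: x'_def)
    moreover have "\<forall>k\<in>insert i I. x' k \<in> C k" using ax unfolding x'_def by auto
    ultimately show "z \<in> fsum (insert i I) C" unfolding fsum_def by blast
  qed
qed

lemma fgc_fsum:
  assumes "finite I" "\<forall>i\<in>I. fgc (C i)" shows "fgc (fsum I C)"
  using assms
proof (induction I rule: finite_induct)
  case empty
  then show ?case unfolding fsum_empty fgc_def by (intro exI[of _ "{}"]) auto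
next
  case (insert i I)
  then show ?case by (simp add: fsum_insert fgc_msum)
qed

lemma dualc_fsum:
  assumes "finite I" "\<forall>i\<in>I. convex_cone (C i)"
  shows "dualc (fsum I C) = (\<Inter>i\<in>I. dualc (C i))"
proof
  show "dualc (fsum I C) \<subseteq> (\<Inter>i\<in>I. dualc (C i))"
  proof
    fix y assume y: "y \<in> dualc (fsum I C)"
    have "y \<in> dualc (C i)" if i: "i \<in> I" for i
    proof -
      have "0 \<le> y \<bullet> z" if z: "z \<in> C i" for z
      proof -
        define x where "x = (\<lambda>k. if k = i then z else 0)"
        have "(\<Sum>k\<in>I. x k) = z" unfolding x_def using assms(1) i by (simp add: sum.delta)
        moreover have "\<forall>k\<in>I. x k \<in> C k"
        proof
          fix k assume k: "k \<in> I"
          show "x k \<in> C k"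
          proof (cases "k = i")
            case True then show ?thesis using z by (simp add: x_def)
          next
            case False
            have "0 \<in> C k" using cone_0[of "C k"] assms(2) k by blast
            then show ?thesis using False by (simp add: x_def)
          qed
        qed
        ultimately have "z \<in> fsum I C" unfolding fsum_def by blast
        then show ?thesis using y unfolding dualc_def by blast
      qed
      then show ?thesis unfolding dualc_def by blast
    qed
    then show "y \<in> (\<Inter>i\<in>I. dualc (C i))" by blast
  qed
  show "(\<Inter>i\<in>I. dualc (C i)) \<subseteq> dualc (fsum I C)"
  proof
    fix y assume y: "y \<in> (\<Inter>i\<in>I. dualc (C i))"
    have "0 \<le> y \<bullet> z" if "z \<in> fsum I C" for z
    proof -
      obtain x where x: "z = (\<Sum>k\<in>I. x k)" "\<forall>k\<in>I. x k \<in> C k"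
        using \<open>z \<in> fsum I C\<close> unfolding fsum_def by blast
      have "y \<bullet> z = (\<Sum>k\<in>I. y \<bullet> x k)" using x(1) by (simp add: inner_sum_right)
      also have "\<dots> \<ge> 0" using x(2) y by (intro sum_nonneg) (auto simp: dualc_def)
      finally show ?thesis .
    qed
    then show "y \<in> dualc (fsum I C)" unfolding dualc_def by blast
  qed
qed

lemma fgc_Inter:
  assumes "finite I" "\<forall>i\<in>I. fgc (C i)"
  shows "fgc (\<Inter>i\<in>I. C i)" "dualc (\<Inter>i\<in>I. C i) = fsum I (\<lambda>i. dualc (C i))"
proof -
  define D where "D = fsum I (\<lambda>i. dualc (C i))"
  have fD: "fgc D" unfolding D_def using assms by (intro fgc_fsum) (auto intro: fgc_dual)
  have "dualc D = (\<Inter>i\<in>I. dualc (dualc (C i)))" unfolding D_def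
    using assms(1) by (rule dualc_fsum) (simp add: dualc_convex_cone)
  also have "\<dots> = (\<Inter>i\<in>I. C i)"
  proof -
    have "\<forall>i\<in>I. dualc (dualc (C i)) = C i" using assms(2) bipolar fgc_convex_cone fgc_closed
      by blast
    then show ?thesis by simp
  qed
  finally have eq: "dualc D = (\<Inter>i\<in>I. C i)" .
  show "fgc (\<Inter>i\<in>I. C i)" using eq fgc_dual[OF fD] by simp
  show "dualc (\<Inter>i\<in>I. C i) = fsum I (\<lambda>i. dualc (C i))"
    unfolding eq[symmetric] D_def[symmetric]
    by (rule bipolar[OF fgc_convex_cone[OF fD] fgc_closed[OF fD]])
qed

lemma convex_cone_hull_linear_image:
  assumes "linear f"
  shows "convex_cone hull (f ` G) = f ` (convex_cone hull G)"
proof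
  have a: "convex_cone (f ` (convex_cone hull G))"
    using convex_cone_linear_image[of "convex_cone hull G" f] assms convex_cone_convex_cone_hull by blast
  have b: "f ` G \<subseteq> f ` (convex_cone hull G)" by (intro image_mono hull_subset)
  show "convex_cone hull (f ` G) \<subseteq> f ` (convex_cone hull G)"
    by (rule hull_minimal[of "f ` G" "f ` (convex_cone hull G)" convex_cone, OF b a])
  define H where "H = convex_cone hull (f ` G)"
  have cc: "convex_cone H" unfolding H_def by (rule convex_cone_convex_cone_hull)
  have "convex_cone {x. f x \<in> H}"
  proof (rule convex_cone_iff[THEN iffD2], intro conjI ballI allI impI)
    show "0 \<in> {x. f x \<in> H}" using cone_0[OF cc] linear_0[OF assms] by simp
    fix x y assume "x \<in> {x. f x \<in> H}" "y \<in> {x. f x \<in> H}"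
    then show "x + y \<in> {x. f x \<in> H}" using cone_add[OF cc] linear_add[OF assms] by simp
  next
    fix x and c :: real assume "x \<in> {x. f x \<in> H}" "0 \<le> c"
    then show "c *\<^sub>R x \<in> {x. f x \<in> H}" using cone_scale[OF cc] linear_scale[OF assms] by simp
  qed
  moreover have "G \<subseteq> {x. f x \<in> H}" unfolding H_def by (auto intro: hull_inc)
  ultimately have "convex_cone hull G \<subseteq> {x. f x \<in> H}"
    by (intro hull_minimal)
  then show "f ` (convex_cone hull G) \<subseteq> convex_cone hull (f ` G)" unfolding H_def by blast
qed

lemma fgc_linear_image: "linear f \<Longrightarrow> fgc C \<Longrightarrow> fgc (f ` C)"
  unfolding fgc_def by (metis convex_cone_hull_linear_image finite_imageI)

lemma fgc_hull: "finite G \<Longrightarrow> fgc (convex_cone hull G)"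
  unfolding fgc_def by blast


definition sf :: "(real^'d) set \<Rightarrow> real^'d \<Rightarrow> ereal" where
  "sf S y = (SUP x\<in>S. ereal (- (y \<bullet> x)))"

definition rep :: "((real^'d) \<times> real) set \<Rightarrow> (real^'d) set \<Rightarrow> bool" where
  "rep H S \<longleftrightarrow> fgc H \<and> (\<forall>p\<in>H. 0 \<le> snd p) \<and> S = {x. (x, 1) \<in> H}"

lemma support_fun_neg: "support_fun (uminus ` S) y = sf S y"
  unfolding support_fun_def sf_def image_image by simp

lemma sf_upper: "x \<in> S \<Longrightarrow> ereal (- (y \<bullet> x)) \<le> sf S y"
  unfolding sf_def by (rule SUP_upper)

lemma sf_least: "(\<And>x. x \<in> S \<Longrightarrow> ereal (- (y \<bullet> x)) \<le> b) \<Longrightarrow> sf S y \<le> b"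
  unfolding sf_def by (rule SUP_least)

lemma sf_gt: "S \<noteq> {} \<Longrightarrow> sf S y > -\<infinity>"
proof -
  assume "S \<noteq> {}"
  then obtain x where "x \<in> S" by blast
  then have "ereal (- (y \<bullet> x)) \<le> sf S y" by (rule sf_upper)
  then show ?thesis by (metis MInfty_neq_ereal(1) ereal_infty_less_eq(2) less_ereal.simps(5) not_le_imp_less)
qed

lemma sf_zero: "S \<noteq> {} \<Longrightarrow> sf S 0 = 0"
  unfolding sf_def by (simp add: zero_ereal_def)

lemma sf_scale:
  assumes "S \<noteq> {}" "0 \<le> c"
  shows "sf S (c *\<^sub>R y) = ereal c * sf S y"
proof -
  have "ereal c * sf S y = (SUP x\<in>S. ereal c * ereal (- (y \<bullet> x)))"
    unfolding sf_def using assms by (rule Sup_ereal_mult_left')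
  also have "\<dots> = sf S (c *\<^sub>R y)" unfolding sf_def by simp
  finally show ?thesis by simp
qed

lemma E1:
  assumes "rep H S" "(y, \<beta>) \<in> dualc H"
  shows "sf S y \<le> ereal \<beta>"
proof (rule sf_least)
  fix x assume "x \<in> S"
  then have "(x, 1) \<in> H" using assms(1) unfolding rep_def by blast
  then have "0 \<le> (y, \<beta>) \<bullet> (x, 1)" using assms(2) unfolding dualc_def by blast
  then show "ereal (- (y \<bullet> x)) \<le> ereal \<beta>" by simp
qed

lemma E2:
  assumes "rep H S" "S \<noteq> {}" "sf S y \<le> ereal \<beta>"
  shows "(y, \<beta>) \<in> dualc H"
proof -
  obtain s where s: "s \<in> S" using assms(2) by blast
  have hS: "(x, 1) \<in> H \<longleftrightarrow> x \<in> S" for x using assms(1) unfolding rep_def by blast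
  have cc: "convex_cone H" using assms(1) fgc_convex_cone unfolding rep_def by blast
  have le: "- (y \<bullet> x) \<le> \<beta>" if "x \<in> S" for x
    using sf_upper[OF that, of y] assms(3) by (meson ereal_less_eq(3) order_trans)
  have "0 \<le> (y, \<beta>) \<bullet> p" if p: "p \<in> H" for p
  proof -
    obtain x l where xl: "p = (x, l)" by (cases p)
    have l0: "0 \<le> l" using p xl assms(1) unfolding rep_def by auto
    show ?thesis
    proof (cases "l = 0")
      case False
      then have lpos: "0 < l" using l0 by simp
      have "(1 / l) *\<^sub>R p \<in> H" using cone_scale[OF cc p] lpos by simp
      then have "((1/l) *\<^sub>R x, 1) \<in> H" using xl lpos by simp
      then have "(1/l) *\<^sub>R x \<in> S" using hS by blast
      then have "- (y \<bullet> ((1/l) *\<^sub>R x)) \<le> \<beta>" by (rule le)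
      then have "- (y \<bullet> x) \<le> \<beta> * l" using lpos by (simp add: field_simps)
      then show ?thesis using xl by (simp add: algebra_simps)
    next
      case True
      have "0 \<le> y \<bullet> x"
      proof (rule ccontr)
        assume "\<not> 0 \<le> y \<bullet> x"
        then have neg: "y \<bullet> x < 0" by simp
        define t where "t = (\<beta> + y \<bullet> s + 1) / (- (y \<bullet> x))"
        have t0: "0 \<le> t" unfolding t_def using neg le[OF s] by (intro divide_nonneg_pos) auto
        have "(s, 1) + t *\<^sub>R p \<in> H" using hS s cone_add[OF cc] cone_scale[OF cc p t0] by blast
        then have "(s + t *\<^sub>R x, 1) \<in> H" using xl True by simp
        then have "s + t *\<^sub>R x \<in> S" using hS by blast
        then have "- (y \<bullet> (s + t *\<^sub>R x)) \<le> \<beta>" by (rule le)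
        moreover have "- (y \<bullet> (s + t *\<^sub>R x)) = \<beta> + 1"
        proof -
          have "y \<bullet> (s + t *\<^sub>R x) = y \<bullet> s + t * (y \<bullet> x)" by (simp add: inner_add_right)
          moreover have "t * (y \<bullet> x) = - (\<beta> + y \<bullet> s + 1)" using neg by (simp add: t_def)
          ultimately show ?thesis by simp
        qed
        ultimately show False by simp
      qed
      then show ?thesis using xl True by simp
    qed
  qed
  then show ?thesis unfolding dualc_def by blast
qed

lemma sf_inter_le:
  assumes "finite I" "(\<Sum>i\<in>I. yy i) = y" "\<forall>i\<in>I. S0 \<subseteq> S i"
  shows "sf S0 y \<le> (\<Sum>i\<in>I. sf (S i) (yy i))"
proof (rule sf_least)
  fix x assume x: "x \<in> S0"
  have "ereal (- (y \<bullet> x)) = (\<Sum>i\<in>I. ereal (- (yy i \<bullet> x)))"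
    unfolding assms(2)[symmetric] by (simp add: inner_sum_left sum_negf)
  also have "\<dots> \<le> (\<Sum>i\<in>I. sf (S i) (yy i))"
    using x assms(3) by (intro sum_mono sf_upper) blast
  finally show "ereal (- (y \<bullet> x)) \<le> (\<Sum>i\<in>I. sf (S i) (yy i))" .
qed

lemma rep_Inter:
  assumes "finite I" "I \<noteq> {}" "\<forall>i\<in>I. rep (H i) (S i)"
  shows "rep (\<Inter>i\<in>I. H i) (\<Inter>i\<in>I. S i)"
proof -
  have "\<forall>i\<in>I. fgc (H i)" using assms(3) unfolding rep_def by blast
  then have "fgc (\<Inter>i\<in>I. H i)" by (rule fgc_Inter(1)[OF assms(1)])
  moreover have "\<forall>p\<in>(\<Inter>i\<in>I. H i). 0 \<le> snd p"
  proof
    fix p assume p: "p \<in> (\<Inter>i\<in>I. H i)"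
    obtain i where "i \<in> I" using assms(2) by blast
    then show "0 \<le> snd p" using p assms(3) unfolding rep_def by blast
  qed
  moreover have "(\<Inter>i\<in>I. S i) = {x. (x, 1) \<in> (\<Inter>i\<in>I. H i)}"
  proof -
    have "\<forall>i\<in>I. S i = {x. (x, 1) \<in> H i}" using assms(3) unfolding rep_def by blast
    then show ?thesis by auto
  qed
  ultimately show ?thesis unfolding rep_def by blast
qed

lemma inf_conv_exact:
  assumes fin: "finite I" and ne: "I \<noteq> {}" and reps: "\<forall>i\<in>I. rep (H i) (S i)"
    and S0ne: "(\<Inter>i\<in>I. S i) \<noteq> {}" and fin_y: "sf (\<Inter>i\<in>I. S i) y < \<infinity>"
  shows "\<exists>yy. (\<Sum>i\<in>I. yy i) = y \<and> (\<forall>i\<in>I. sf (S i) (yy i) < \<infinity> \<and> sf (S i) (yy i) > -\<infinity>)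
           \<and> sf (\<Inter>i\<in>I. S i) y = (\<Sum>i\<in>I. sf (S i) (yy i))"
proof -
  define S0 where "S0 = (\<Inter>i\<in>I. S i)"
  define H0 where "H0 = (\<Inter>i\<in>I. H i)"
  have rep0: "rep H0 S0" unfolding H0_def S0_def using assms by (intro rep_Inter)
  have gt: "sf S0 y > -\<infinity>" using S0ne sf_gt unfolding S0_def by blast
  have fy: "sf S0 y < \<infinity>" using fin_y unfolding S0_def .
  obtain r where r: "sf S0 y = ereal r" using gt fy by (cases "sf S0 y") auto
  have S0ne': "S0 \<noteq> {}" using S0ne unfolding S0_def .
  have yr: "(y, r) \<in> dualc H0" using E2[OF rep0 S0ne'] r by simp
  have fH: "\<forall>i\<in>I. fgc (H i)" using reps unfolding rep_def by blast
  have "dualc H0 = fsum I (\<lambda>i. dualc (H i))"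
    unfolding H0_def by (rule fgc_Inter(2)[OF fin fH])
  then have "(y, r) \<in> fsum I (\<lambda>i. dualc (H i))" using yr by simp
  then have "\<exists>z. (y, r) = (\<Sum>i\<in>I. z i) \<and> (\<forall>i\<in>I. z i \<in> dualc (H i))"
    unfolding fsum_def mem_Collect_eq by blast
  then obtain z where z: "(y, r) = (\<Sum>i\<in>I. z i)" "\<forall>i\<in>I. z i \<in> dualc (H i)"
    by blast
  define yy where "yy i = fst (z i)" for i
  define bb where "bb i = snd (z i)" for i
  have "y = fst (\<Sum>i\<in>I. z i)" using z(1) by (metis fst_conv)
  then have sumy: "(\<Sum>i\<in>I. yy i) = y" unfolding yy_def fst_sum by simp
  have "r = snd (\<Sum>i\<in>I. z i)" using z(1) by (metis snd_conv)
  then have sumb: "(\<Sum>i\<in>I. bb i) = r" unfolding bb_def snd_sum by simp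
  have le_i: "sf (S i) (yy i) \<le> ereal (bb i)" if "i \<in> I" for i
  proof -
    have "z i = (yy i, bb i)" unfolding yy_def bb_def by simp
    then have "(yy i, bb i) \<in> dualc (H i)" using z(2) that by metis
    then show ?thesis using E1[of "H i" "S i" "yy i" "bb i"] reps that by blast
  qed
  have Sne: "S i \<noteq> {}" if "i \<in> I" for i using S0ne that by blast
  have A: "sf S0 y \<le> (\<Sum>i\<in>I. sf (S i) (yy i))"
    unfolding S0_def by (rule sf_inter_le[OF fin sumy]) blast
  have "(\<Sum>i\<in>I. sf (S i) (yy i)) \<le> (\<Sum>i\<in>I. ereal (bb i))" using le_i by (intro sum_mono)
  also have "\<dots> = sf S0 y" using sumb r by simp
  finally have B: "(\<Sum>i\<in>I. sf (S i) (yy i)) \<le> sf S0 y" .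
  have eq: "sf S0 y = (\<Sum>i\<in>I. sf (S i) (yy i))" using A B by (rule antisym)
  have fin_i: "sf (S i) (yy i) < \<infinity> \<and> sf (S i) (yy i) > -\<infinity>" if "i \<in> I" for i
  proof
    have "ereal (bb i) < \<infinity>" by simp
    then show "sf (S i) (yy i) < \<infinity>" using le_i[OF that] by (rule le_less_trans[rotated])
    show "sf (S i) (yy i) > -\<infinity>" using sf_gt[OF Sne[OF that]] .
  qed
  show ?thesis
    using sumy eq fin_i unfolding S0_def by blast
qed

lemma linear_pair0: "linear (\<lambda>q::'a::real_vector. (q, 0::real))"
  by (rule linearI) auto

lemma cone_hull_single: "convex_cone hull {p} = {c *\<^sub>R p | c. 0 \<le> c}"
proof (intro set_eqI iffI)
  fix x assume "x \<in> convex_cone hull {p}"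
  then have "x = 0 \<or> (\<exists>c\<ge>0. x = c *\<^sub>R p)"
    unfolding convex_cone_hull_convex_hull convex_hull_singleton by auto
  then show "x \<in> {c *\<^sub>R p | c. 0 \<le> c}"
    by (metis (mono_tags, lifting) mem_Collect_eq order_refl scale_zero_left)
next
  fix x assume "x \<in> {c *\<^sub>R p | c. 0 \<le> c}"
  then obtain c where "x = c *\<^sub>R p" "0 \<le> c" by blast
  then show "x \<in> convex_cone hull {p}"
    using convex_cone_hull_mul[of p "{p}" c] hull_inc[of p "{p}"] by simp
qed

lemma rep_msum:
  assumes "rep H S" "fgc Q"
  shows "rep (msum H ((\<lambda>q. (q, 0)) ` Q)) (msum S Q)"
proof -
  have "fgc (msum H ((\<lambda>q. (q, 0::real)) ` Q))"
    using assms by (intro fgc_msum fgc_linear_image linear_pair0) (auto simp: rep_def)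
  moreover have "\<forall>p\<in>msum H ((\<lambda>q. (q, 0)) ` Q). 0 \<le> snd p"
    using assms(1) unfolding rep_def msum_def by auto
  moreover have "msum S Q = {x. (x, 1) \<in> msum H ((\<lambda>q. (q, 0)) ` Q)}"
  proof (intro set_eqI iffI)
    fix x assume "x \<in> msum S Q"
    then obtain s q where "x = s + q" "s \<in> S" "q \<in> Q" unfolding msum_def by blast
    moreover have "(s, 1) \<in> H" using \<open>s \<in> S\<close> assms(1) unfolding rep_def by blast
    ultimately have "(x, 1::real) = (s, 1) + (q, 0) \<and> (s,1) \<in> H \<and> (q, 0::real) \<in> (\<lambda>q. (q, 0)) ` Q" by auto
    then show "x \<in> {x. (x, 1) \<in> msum H ((\<lambda>q. (q, 0)) ` Q)}" unfolding msum_def by blast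
  next
    fix x assume "x \<in> {x. (x, 1) \<in> msum H ((\<lambda>q. (q, 0)) ` Q)}"
    then obtain h q where hq: "(x, 1) = h + (q, 0)" "h \<in> H" "q \<in> Q" unfolding msum_def by blast
    then have "h = (x - q, 1)" by (cases h) auto
    then have "x - q \<in> S" using hq(2) assms(1) unfolding rep_def by auto
    then show "x \<in> msum S Q" unfolding msum_def using hq(3) by (metis (mono_tags, lifting) diff_add_cancel mem_Collect_eq)
  qed
  ultimately show ?thesis unfolding rep_def by blast
qed

lemma rep_translate:
  assumes "fgc Q"
  shows "\<exists>H. rep H ((\<lambda>q. a + q) ` Q)"
proof -
  define H where "H = msum (convex_cone hull {(a, 1::real)}) ((\<lambda>q. (q, 0)) ` Q)"
  have "fgc H" unfolding H_def using assms by (intro fgc_msum fgc_linear_image linear_pair0 fgc_hull) auto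
  moreover have "\<forall>p\<in>H. 0 \<le> snd p" unfolding H_def msum_def cone_hull_single by auto
  moreover have "(\<lambda>q. a + q) ` Q = {x. (x, 1) \<in> H}"
  proof (intro set_eqI iffI)
    fix x assume "x \<in> (\<lambda>q. a + q) ` Q"
    then obtain q where "x = a + q" "q \<in> Q" by blast
    then have "(x, 1) = 1 *\<^sub>R (a, 1) + (q, 0)" by simp
    then show "x \<in> {x. (x, 1) \<in> H}" unfolding H_def msum_def cone_hull_single using \<open>q \<in> Q\<close>
      by (smt (verit) image_eqI mem_Collect_eq)
  next
    fix x assume "x \<in> {x. (x, 1) \<in> H}"
    then obtain aa b where ab: "(x, 1) = aa + b" "aa \<in> {c *\<^sub>R (a, 1::real) | c. 0 \<le> c}"
       "b \<in> (\<lambda>q. (q, 0::real)) ` Q"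
      unfolding H_def msum_def cone_hull_single by blast
    then obtain c q where cq: "(x, 1::real) = c *\<^sub>R (a, 1::real) + (q, 0::real)" "q \<in> Q" "0 \<le> c" by blast
    then have "c = 1" by simp
    then have "x = a + q" using cq by simp
    then show "x \<in> (\<lambda>q. a + q) ` Q" using cq(2) by blast
  qed
  ultimately show ?thesis unfolding rep_def by blast
qed


locale setting =
  fixes Om :: "'w set" and F :: "nat \<Rightarrow> 'w set set" and T :: nat
    and rate :: "nat \<Rightarrow> 'w \<Rightarrow> 'd::finite \<Rightarrow> 'd \<Rightarrow> real"
    and xi :: "nat \<Rightarrow> 'w \<Rightarrow> real^'d" and j :: 'd
  assumes filt: "filtration Om F T"
    and rates: "exchange_rates Om F T rate"
    and NA: "no_arbitrage Om F T rate"
    and opt: "american_option F T xi"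
begin

lemma filt_parts: "finite Om" "\<forall>t\<le>T. partition_on Om (F t)"
  "\<forall>t<T. \<forall>\<nu>\<in>F (Suc t). \<exists>\<mu>\<in>F t. \<nu> \<subseteq> \<mu>"
proof -
  have A: "finite Om \<and> (\<forall>t\<le>T. partition_on Om (F t)) \<and> F 0 = {Om} \<and> F T = (\<lambda>w. {w}) ` Om
     \<and> (\<forall>t<T. \<forall>\<nu>\<in>F (Suc t). \<exists>\<mu>\<in>F t. \<nu> \<subseteq> \<mu>)" using filt unfolding filtration_def .
  show "finite Om" using A by (rule conjunct1)
  show "\<forall>t\<le>T. partition_on Om (F t)" using A[THEN conjunct2] by (rule conjunct1)
  show "\<forall>t<T. \<forall>\<nu>\<in>F (Suc t). \<exists>\<mu>\<in>F t. \<nu> \<subseteq> \<mu>"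
    using A[THEN conjunct2, THEN conjunct2, THEN conjunct2, THEN conjunct2] .
qed

lemma finOm: "finite Om" by (rule filt_parts(1))

lemma part: "t \<le> T \<Longrightarrow> partition_on Om (F t)" using filt_parts(2) by blast

lemma atom_ne: "t \<le> T \<Longrightarrow> \<mu> \<in> F t \<Longrightarrow> \<mu> \<noteq> {}"
  using part partition_onD3 by blast

lemma atom_sub: "t \<le> T \<Longrightarrow> \<mu> \<in> F t \<Longrightarrow> \<mu> \<subseteq> Om"
  using part partition_onD1 by blast

lemma atom_unique: "t \<le> T \<Longrightarrow> \<mu> \<in> F t \<Longrightarrow> \<mu>' \<in> F t \<Longrightarrow> w \<in> \<mu> \<Longrightarrow> w \<in> \<mu>' \<Longrightarrow> \<mu> = \<mu>'"
  using part partition_onD2 by (metis disjointD disjoint_iff)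

lemma atom_cover: "t \<le> T \<Longrightarrow> w \<in> Om \<Longrightarrow> \<exists>\<mu>\<in>F t. w \<in> \<mu>"
  using part partition_onD1 by blast

lemma finF: "t \<le> T \<Longrightarrow> finite (F t)"
proof -
  assume "t \<le> T"
  then have "F t \<subseteq> Pow Om" using atom_sub by blast
  then show "finite (F t)" using finOm by (meson finite_Pow_iff finite_subset)
qed

lemma refine_step: "t < T \<Longrightarrow> \<nu> \<in> F (Suc t) \<Longrightarrow> \<exists>\<mu>\<in>F t. \<nu> \<subseteq> \<mu>"
  using filt_parts(3) by blast

lemma refine: "t \<le> s \<Longrightarrow> s \<le> T \<Longrightarrow> a \<in> F s \<Longrightarrow> \<exists>\<mu>\<in>F t. a \<subseteq> \<mu>"
proof (induction s arbitrary: a rule: dec_induct)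
  case base
  then show ?case by blast
next
  case (step s)
  then obtain b where "b \<in> F s" "a \<subseteq> b" using refine_step[of s a] by auto
  then show ?case using step by (meson Suc_leD order_trans)
qed

lemma split_atom:
  assumes "t \<le> s" "s \<le> T" "\<mu> \<in> F t" "a \<in> F s"
  shows "a \<subseteq> \<mu> \<or> a \<inter> \<mu> = {}"
proof -
  obtain \<mu>' where m: "\<mu>' \<in> F t" "a \<subseteq> \<mu>'" using refine assms by blast
  show ?thesis
  proof (cases "\<mu>' = \<mu>")
    case True then show ?thesis using m by blast
  next
    case False
    then have "\<mu>' \<inter> \<mu> = {}" using atom_unique[of t \<mu>' \<mu>] assms m by fastforce
    then show ?thesis using m by blast
  qed
qed

lemma adapted_mono:
  assumes "t \<le> s" "s \<le> T" "adapted F t X" shows "adapted F s X"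
  unfolding adapted_def
proof (intro ballI)
  fix a w w' assume a: "a \<in> F s" "w \<in> a" "w' \<in> a"
  obtain \<mu> where m: "\<mu> \<in> F t" "a \<subseteq> \<mu>" using refine[OF assms(1,2) a(1)] by blast
  have "\<forall>\<mu>\<in>F t. \<forall>w\<in>\<mu>. \<forall>w'\<in>\<mu>. X w = X w'" using assms(3) unfolding adapted_def .
  then show "X w = X w'" using m a by blast
qed

lemma adapted_ind:
  assumes "t \<le> s" "s \<le> T" "\<mu> \<in> F t" "adapted F s X"
  shows "adapted F s (\<lambda>w. if w \<in> \<mu> then X w else c)"
  unfolding adapted_def
proof (intro ballI)
  fix a w w' assume a: "a \<in> F s" "w \<in> a" "w' \<in> a"
  have "\<forall>a\<in>F s. \<forall>w\<in>a. \<forall>w'\<in>a. X w = X w'" using assms(4) unfolding adapted_def .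
  then have e: "X w = X w'" using a by blast
  have "a \<subseteq> \<mu> \<or> a \<inter> \<mu> = {}" using split_atom[OF assms(1,2,3) a(1)] .
  then show "(if w \<in> \<mu> then X w else c) = (if w' \<in> \<mu> then X w' else c)"
  proof
    assume "a \<subseteq> \<mu>" then show ?thesis using a e by auto
  next
    assume "a \<inter> \<mu> = {}" then have "w \<notin> \<mu>" "w' \<notin> \<mu>" using a by blast+
    then show ?thesis by simp
  qed
qed

lemma adapted_const: "adapted F s (\<lambda>w. c)"
  unfolding adapted_def by simp

lemma atnode_eq:
  assumes "adapted F t X" "\<mu> \<in> F t" "w \<in> \<mu>" shows "atnode X \<mu> = X w"
proof -
  have "(SOME w. w \<in> \<mu>) \<in> \<mu>" using assms(3) by (rule someI)
  moreover have "\<forall>\<mu>\<in>F t. \<forall>w\<in>\<mu>. \<forall>w'\<in>\<mu>. X w = X w'" using assms(1) unfolding adapted_def .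
  ultimately show ?thesis unfolding atnode_def using assms(2,3) by blast
qed

lemma rate_adapted: "t \<le> T \<Longrightarrow> adapted F t (rate t)"
  using rates unfolding exchange_rates_def by blast

lemma Kcone_node:
  assumes "t \<le> T" "\<mu> \<in> F t" "w \<in> \<mu>" "w' \<in> \<mu>"
  shows "Kcone rate t w = Kcone rate t w'"
proof -
  have "\<forall>\<mu>\<in>F t. \<forall>w\<in>\<mu>. \<forall>w'\<in>\<mu>. rate t w = rate t w'" using rate_adapted[OF assms(1)] unfolding adapted_def .
  then have "rate t w = rate t w'" using assms(2,3,4) by blast
  then show ?thesis unfolding Kcone_def by simp
qed

end

definition Kgen :: "(nat \<Rightarrow> 'w \<Rightarrow> 'd::finite \<Rightarrow> 'd \<Rightarrow> real) \<Rightarrow> nat \<Rightarrow> 'w \<Rightarrow> (real^'d) set" where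
  "Kgen rate t w = range (\<lambda>k. axis k 1) \<union> {rate t w j k *\<^sub>R axis j 1 - axis k 1 | j k. True}"

lemma Kcone_gen: "Kcone rate t w = convex_cone hull (Kgen rate t w)"
  unfolding Kcone_def Kgen_def ..

lemma finite_Kgen: "finite (Kgen rate t w)"
proof -
  have "{rate t w j k *\<^sub>R axis j 1 - axis k 1 | j k. True} \<subseteq> (\<lambda>p. rate t w (fst p) (snd p) *\<^sub>R axis (fst p) 1 - axis (snd p) (1::real)) ` UNIV"
    by (clarsimp simp: image_iff) (metis fst_conv snd_conv)
  then have "finite {rate t w j k *\<^sub>R axis j 1 - axis k (1::real) | j k. True}"
    by (rule finite_subset) simp
  then show ?thesis unfolding Kgen_def by simp
qed

lemma fgc_Kcone: "fgc (Kcone rate t w)"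
  unfolding Kcone_gen using finite_Kgen by (rule fgc_hull)

lemma cc_Kcone: "convex_cone (Kcone rate t w)"
  by (rule fgc_convex_cone[OF fgc_Kcone])

lemma axis_Kcone: "axis k 1 \<in> Kcone rate t w"
  unfolding Kcone_gen Kgen_def by (rule hull_inc) (rule UnI1, rule rangeI)

lemma rate_Kcone: "rate t w j k *\<^sub>R axis j 1 - axis k 1 \<in> Kcone rate t w"
  unfolding Kcone_gen Kgen_def by (rule hull_inc) (rule UnI2, rule CollectI, rule exI[of _ j], rule exI[of _ k], simp)

lemma zero_Kcone: "0 \<in> Kcone rate t w"
  by (rule cone_0[OF cc_Kcone])

lemma cone_sum:
  assumes "convex_cone C" "finite I" "\<forall>i\<in>I. f i \<in> C" shows "(\<Sum>i\<in>I. f i) \<in> C"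
  using assms(2,3)
proof (induction I rule: finite_induct)
  case empty then show ?case using cone_0[OF assms(1)] by simp
next
  case (insert i I) then show ?case using cone_add[OF assms(1)] by simp
qed

lemma nonneg_Kcone:
  assumes "\<forall>k. 0 \<le> x $ k" shows "x \<in> Kcone rate t w"
proof -
  have "(\<Sum>k\<in>UNIV. (x$k) *s axis k 1) = x" by (rule basis_expansion)
  then have e: "(\<Sum>k\<in>UNIV. (x$k) *\<^sub>R axis k 1) = x" by (simp only: scalar_mult_eq_scaleR)
  have "\<forall>i\<in>UNIV. x $ i *\<^sub>R axis i 1 \<in> Kcone rate t w"
  proof
    fix i :: 'a
    have "0 \<le> x $ i" using assms by blast
    then show "x $ i *\<^sub>R axis i 1 \<in> Kcone rate t w" by (rule cone_scale[OF cc_Kcone axis_Kcone])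
  qed
  then have "(\<Sum>k\<in>UNIV. (x$k) *\<^sub>R axis k 1) \<in> Kcone rate t w"
    by (rule cone_sum[OF cc_Kcone finite_class.finite_UNIV])
  then show ?thesis unfolding e .
qed


context setting begin

abbreviation Q where "Q t \<mu> \<equiv> Qnode Om F T rate t \<mu>"

lemma QsetI:
  assumes "adapted F t z" "\<forall>s\<in>{t+1..T+1}. adapted F (s - 1) (y s)" "\<forall>w\<in>Om. y (T+1) w = 0"
    "\<forall>w\<in>Om. z w - y (t+1) w \<in> Kcone rate t w"
    "\<forall>s\<in>{t+1..T}. \<forall>w\<in>Om. y s w - y (s+1) w \<in> Kcone rate s w"
  shows "z \<in> Qset Om F T rate t"
  unfolding Qset_def mem_Collect_eq using assms by blast

lemma QsetE:
  assumes "z \<in> Qset Om F T rate t"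
  obtains y where "adapted F t z" "\<forall>s\<in>{t+1..T+1}. adapted F (s - 1) (y s)" "\<forall>w\<in>Om. y (T+1) w = 0"
    "\<forall>w\<in>Om. z w - y (t+1) w \<in> Kcone rate t w"
    "\<forall>s\<in>{t+1..T}. \<forall>w\<in>Om. y s w - y (s+1) w \<in> Kcone rate s w"
  using assms unfolding Qset_def mem_Collect_eq by blast

lemma QnodeI: "z \<in> Qset Om F T rate t \<Longrightarrow> \<forall>w\<in>\<mu>. z w = v \<Longrightarrow> v \<in> Q t \<mu>"
  unfolding Qnode_def by blast

lemma QnodeE:
  assumes "v \<in> Q t \<mu>" obtains z where "z \<in> Qset Om F T rate t" "\<forall>w\<in>\<mu>. z w = v"
  using assms unfolding Qnode_def by blast

lemma adapted_at:
  assumes "adapted F t X" "\<mu> \<in> F t" "w \<in> \<mu>" "w' \<in> \<mu>" shows "X w = X w'"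
proof -
  have "\<forall>\<mu>\<in>F t. \<forall>w\<in>\<mu>. \<forall>w'\<in>\<mu>. X w = X w'" using assms(1) unfolding adapted_def .
  then show ?thesis using assms(2-4) by blast
qed

lemma QK:
  assumes "t \<le> T" "\<mu> \<in> F t" "w0 \<in> \<mu>"
  shows "Kcone rate t w0 \<subseteq> Q t \<mu>"
proof
  fix v assume v: "v \<in> Kcone rate t w0"
  define z where "z = (\<lambda>w. if w \<in> \<mu> then v else (0::real^'d))"
  define y where "y = (\<lambda>(s::nat) (w::'w). (0::real^'d))"
  have "z \<in> Qset Om F T rate t"
  proof (rule QsetI)
    show "adapted F t z" unfolding z_def by (rule adapted_ind[OF order_refl assms(1,2) adapted_const])
    show "\<forall>s\<in>{t+1..T+1}. adapted F (s - 1) (y s)" unfolding y_def by (simp add: adapted_const)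
    show "\<forall>w\<in>Om. y (T+1) w = 0" unfolding y_def by simp
    show "\<forall>w\<in>Om. z w - y (t+1) w \<in> Kcone rate t w"
    proof
      fix w assume "w \<in> Om"
      show "z w - y (t+1) w \<in> Kcone rate t w"
      proof (cases "w \<in> \<mu>")
        case True
        then have "Kcone rate t w0 = Kcone rate t w" using Kcone_node[OF assms(1,2,3)] by blast
        then show ?thesis using True v by (simp add: z_def y_def)
      next
        case False then show ?thesis by (simp add: z_def y_def zero_Kcone)
      qed
    qed
    show "\<forall>s\<in>{t+1..T}. \<forall>w\<in>Om. y s w - y (s+1) w \<in> Kcone rate s w"
      by (simp add: y_def zero_Kcone)
  qed
  moreover have "\<forall>w\<in>\<mu>. z w = v" by (simp add: z_def)
  ultimately show "v \<in> Q t \<mu>" by (rule QnodeI)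
qed

lemma Q_T:
  assumes "\<mu> \<in> F T" "w0 \<in> \<mu>"
  shows "Q T \<mu> = Kcone rate T w0"
proof
  show "Kcone rate T w0 \<subseteq> Q T \<mu>" by (rule QK[OF order_refl assms])
  show "Q T \<mu> \<subseteq> Kcone rate T w0"
  proof
    fix v assume "v \<in> Q T \<mu>"
    then obtain z where z: "z \<in> Qset Om F T rate T" "\<forall>w\<in>\<mu>. z w = v" by (rule QnodeE)
    obtain y where y: "\<forall>w\<in>Om. y (T+1) w = 0" "\<forall>w\<in>Om. z w - y (T+1) w \<in> Kcone rate T w"
      using z(1) by (rule QsetE)
    have "w0 \<in> Om" using atom_sub[OF order_refl assms(1)] assms(2) by blast
    then have "z w0 - y (T+1) w0 \<in> Kcone rate T w0" "y (T+1) w0 = 0" using y by blast+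
    then show "v \<in> Kcone rate T w0" using z(2) assms(2) by simp
  qed
qed

lemma Q_rec_sub:
  assumes "t < T" "\<mu> \<in> F t" "w0 \<in> \<mu>" "v \<in> Q t \<mu>"
  shows "\<exists>k c. v = k + c \<and> k \<in> Kcone rate t w0 \<and> (\<forall>\<nu>\<in>succ F t \<mu>. c \<in> Q (Suc t) \<nu>)"
proof -
  have tT: "t \<le> T" using assms(1) by simp
  obtain z where z: "z \<in> Qset Om F T rate t" "\<forall>w\<in>\<mu>. z w = v" using assms(4) by (rule QnodeE)
  obtain y where y: "\<forall>s\<in>{t+1..T+1}. adapted F (s - 1) (y s)" "\<forall>w\<in>Om. y (T+1) w = 0"
    "\<forall>w\<in>Om. z w - y (t+1) w \<in> Kcone rate t w"
    "\<forall>s\<in>{t+1..T}. \<forall>w\<in>Om. y s w - y (s+1) w \<in> Kcone rate s w"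
    using z(1) by (rule QsetE)
  have w0Om: "w0 \<in> Om" using atom_sub[OF tT assms(2)] assms(3) by blast
  define c where "c = y (t+1) w0"
  have "t+1 \<in> {t+1..T+1}" using tT by simp
  then have "adapted F (t+1-1) (y (t+1))" using y(1) by blast
  then have ad: "adapted F t (y (t+1))" by simp
  have yc: "y (t+1) w = c" if "w \<in> \<mu>" for w
    unfolding c_def by (rule adapted_at[OF ad assms(2) that assms(3)])
  have k: "v - c \<in> Kcone rate t w0" using y(3) w0Om z(2) assms(3) unfolding c_def by metis
  have "c \<in> Q (Suc t) \<nu>" if \<nu>: "\<nu> \<in> succ F t \<mu>" for \<nu>
  proof -
    have \<nu>F: "\<nu> \<in> F (Suc t)" and \<nu>sub: "\<nu> \<subseteq> \<mu>" using \<nu> unfolding succ_def by auto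
    have "y (t+1) \<in> Qset Om F T rate (Suc t)"
    proof (rule QsetI)
      show "adapted F (Suc t) (y (t + 1))" using adapted_mono[OF _ _ ad] assms(1) by simp
      show "\<forall>s\<in>{Suc t+1..T+1}. adapted F (s - 1) (y s)" using y(1) by auto
      show "\<forall>w\<in>Om. y (T+1) w = 0" by (rule y(2))
      show "\<forall>w\<in>Om. y (t + 1) w - y (Suc t + 1) w \<in> Kcone rate (Suc t) w"
        using y(4) assms(1) by simp
      show "\<forall>s\<in>{Suc t+1..T}. \<forall>w\<in>Om. y s w - y (s+1) w \<in> Kcone rate s w" using y(4) by auto
    qed
    moreover have "\<forall>w\<in>\<nu>. y (t+1) w = c" using yc \<nu>sub by blast
    ultimately show ?thesis by (rule QnodeI)
  qed
  then show ?thesis using k by (intro exI[of _ "v - c"] exI[of _ c]) auto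
qed

lemma succ_of:
  assumes "t < T" "\<mu> \<in> F t" "w \<in> \<mu>"
  shows "\<exists>\<nu>\<in>succ F t \<mu>. w \<in> \<nu>"
proof -
  have "w \<in> Om" using atom_sub[of t \<mu>] assms by auto
  then obtain \<nu> where \<nu>: "\<nu> \<in> F (Suc t)" "w \<in> \<nu>" using atom_cover[of "Suc t"] assms(1) by auto
  obtain \<mu>' where m: "\<mu>' \<in> F t" "\<nu> \<subseteq> \<mu>'" using refine_step[OF assms(1) \<nu>(1)] by blast
  have "\<mu>' = \<mu>" using atom_unique[of t \<mu>' \<mu> w] assms m \<nu> by auto
  then show ?thesis using \<nu> m unfolding succ_def by auto
qed

lemma succ_unique:
  assumes "t < T" "\<nu> \<in> succ F t \<mu>" "\<nu>' \<in> succ F t \<mu>" "w \<in> \<nu>" "w \<in> \<nu>'"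
  shows "\<nu> = \<nu>'"
  using atom_unique[of "Suc t" \<nu> \<nu>' w] assms unfolding succ_def by auto

lemma Q_rec_sup:
  assumes tT: "t < T" and \<mu>: "\<mu> \<in> F t" and w0: "w0 \<in> \<mu>" and k: "k \<in> Kcone rate t w0"
    and c: "\<forall>\<nu>\<in>succ F t \<mu>. c \<in> Q (Suc t) \<nu>"
  shows "k + c \<in> Q t \<mu>"
proof -
  have "\<forall>\<nu>\<in>succ F t \<mu>. \<exists>zy. fst zy \<in> Qset Om F T rate (Suc t) \<and> (\<forall>w\<in>\<nu>. fst zy w = c)"
    using c unfolding Qnode_def by auto
  then obtain g where g: "\<forall>\<nu>\<in>succ F t \<mu>. fst (g \<nu>) \<in> Qset Om F T rate (Suc t) \<and> (\<forall>w\<in>\<nu>. fst (g \<nu>) w = c)"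
    by metis
  define zz where "zz \<nu> = fst (g \<nu>)" for \<nu>
  have zz: "zz \<nu> \<in> Qset Om F T rate (Suc t)" "\<forall>w\<in>\<nu>. zz \<nu> w = c" if "\<nu> \<in> succ F t \<mu>" for \<nu>
    using g that unfolding zz_def by auto
  have "\<forall>\<nu>\<in>succ F t \<mu>. \<exists>y. (\<forall>s\<in>{Suc t+1..T+1}. adapted F (s - 1) (y s)) \<and> (\<forall>w\<in>Om. y (T+1) w = 0)
    \<and> (\<forall>w\<in>Om. zz \<nu> w - y (Suc t+1) w \<in> Kcone rate (Suc t) w)
    \<and> (\<forall>s\<in>{Suc t+1..T}. \<forall>w\<in>Om. y s w - y (s+1) w \<in> Kcone rate s w)"
  proof
    fix \<nu> assume "\<nu> \<in> succ F t \<mu>"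
    then obtain y where "\<forall>s\<in>{Suc t+1..T+1}. adapted F (s - 1) (y s)" "\<forall>w\<in>Om. y (T+1) w = 0"
      "\<forall>w\<in>Om. zz \<nu> w - y (Suc t+1) w \<in> Kcone rate (Suc t) w"
      "\<forall>s\<in>{Suc t+1..T}. \<forall>w\<in>Om. y s w - y (s+1) w \<in> Kcone rate s w"
      using zz(1) by (metis QsetE)
    then show "\<exists>y. (\<forall>s\<in>{Suc t+1..T+1}. adapted F (s - 1) (y s)) \<and> (\<forall>w\<in>Om. y (T+1) w = 0)
    \<and> (\<forall>w\<in>Om. zz \<nu> w - y (Suc t+1) w \<in> Kcone rate (Suc t) w)
    \<and> (\<forall>s\<in>{Suc t+1..T}. \<forall>w\<in>Om. y s w - y (s+1) w \<in> Kcone rate s w)" by blast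
  qed
  then obtain yy where yy: "\<forall>\<nu>\<in>succ F t \<mu>. (\<forall>s\<in>{Suc t+1..T+1}. adapted F (s - 1) (yy \<nu> s)) \<and> (\<forall>w\<in>Om. yy \<nu> (T+1) w = 0)
    \<and> (\<forall>w\<in>Om. zz \<nu> w - yy \<nu> (Suc t+1) w \<in> Kcone rate (Suc t) w)
    \<and> (\<forall>s\<in>{Suc t+1..T}. \<forall>w\<in>Om. yy \<nu> s w - yy \<nu> (s+1) w \<in> Kcone rate s w)"
    by (rule bchoice[elim_format]) blast
  define nd where "nd w = (SOME \<nu>. \<nu> \<in> succ F t \<mu> \<and> w \<in> \<nu>)" for w
  have nd: "nd w \<in> succ F t \<mu> \<and> w \<in> nd w" if "w \<in> \<mu>" for w
  proof -
    have "\<exists>\<nu>. \<nu> \<in> succ F t \<mu> \<and> w \<in> \<nu>" using succ_of[OF tT \<mu> that] by blast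
    then show ?thesis unfolding nd_def by (rule someI_ex)
  qed
  have nd_eq: "nd w = \<nu>" if "w \<in> \<nu>" "\<nu> \<in> succ F t \<mu>" for w \<nu>
  proof -
    have "w \<in> \<mu>" using that unfolding succ_def by auto
    then show ?thesis using nd succ_unique[OF tT] that by blast
  qed
  define z where "z = (\<lambda>w. if w \<in> \<mu> then k + c else (0::real^'d))"
  define Y where "Y = (\<lambda>s w. if s = t+1 then (if w \<in> \<mu> then c else 0)
                              else if w \<in> \<mu> then yy (nd w) s w else (0::real^'d))"
  have "z \<in> Qset Om F T rate t"
  proof (rule QsetI)
    show "adapted F t z" unfolding z_def using tT by (intro adapted_ind[OF order_refl _ \<mu> adapted_const]) simp
    show "\<forall>s\<in>{t+1..T+1}. adapted F (s - 1) (Y s)"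
    proof
      fix s assume s: "s \<in> {t+1..T+1}"
      show "adapted F (s - 1) (Y s)"
      proof (cases "s = t+1")
        case True
        then show ?thesis unfolding Y_def using tT by (simp add: adapted_ind[OF order_refl _ \<mu> adapted_const])
      next
        case False
        then have s2: "Suc t + 1 \<le> s" "s \<le> T + 1" using s by auto
        have "Y s = (\<lambda>w. if w \<in> \<mu> then yy (nd w) s w else 0)" unfolding Y_def using False by simp
        moreover have "adapted F (s - 1) (\<lambda>w. if w \<in> \<mu> then yy (nd w) s w else 0)"
          unfolding adapted_def
        proof (intro ballI)
          fix a w w' assume a: "a \<in> F (s - 1)" "w \<in> a" "w' \<in> a"
          have le: "t \<le> s - 1" "s - 1 \<le> T" "Suc t \<le> s - 1" using s2 by auto
          show "(if w \<in> \<mu> then yy (nd w) s w else 0) = (if w' \<in> \<mu> then yy (nd w') s w' else 0)"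
          proof (cases "a \<subseteq> \<mu>")
            case True
            obtain \<nu> where \<nu>: "\<nu> \<in> F (Suc t)" "a \<subseteq> \<nu>" using refine[OF le(3) le(2) a(1)] by blast
            obtain \<mu>' where m: "\<mu>' \<in> F t" "\<nu> \<subseteq> \<mu>'" using refine_step[OF tT \<nu>(1)] by blast
            have "\<mu>' = \<mu>" using atom_unique[of t \<mu>' \<mu> w] m \<nu> True a \<mu> tT by auto
            then have \<nu>s: "\<nu> \<in> succ F t \<mu>" using \<nu> m unfolding succ_def by auto
            have "nd w = \<nu>" "nd w' = \<nu>" using nd_eq \<nu>s \<nu>(2) a by auto
            moreover have "adapted F (s - 1) (yy \<nu> s)" using yy \<nu>s s2 by auto
            ultimately show ?thesis using True a adapted_at[of "s - 1" "yy \<nu> s" a w w'] by auto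
          next
            case False
            then have "a \<inter> \<mu> = {}" using split_atom[OF le(1) le(2) \<mu> a(1)] by blast
            then show ?thesis using a by auto
          qed
        qed
        ultimately show ?thesis by simp
      qed
    qed
    show "\<forall>w\<in>Om. Y (T+1) w = 0"
    proof
      fix w assume w: "w \<in> Om"
      show "Y (T+1) w = 0"
      proof (cases "w \<in> \<mu>")
        case True
        then have "yy (nd w) (T+1) w = 0" using yy nd w by blast
        then show ?thesis unfolding Y_def using tT True by simp
      qed (use tT in \<open>simp add: Y_def\<close>)
    qed
    show "\<forall>w\<in>Om. z w - Y (t+1) w \<in> Kcone rate t w"
    proof
      fix w assume w: "w \<in> Om"
      show "z w - Y (t+1) w \<in> Kcone rate t w"
      proof (cases "w \<in> \<mu>")
        case True
        then have "Kcone rate t w0 = Kcone rate t w" using Kcone_node[OF _ \<mu> w0] tT by simp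
        then show ?thesis using True k by (simp add: z_def Y_def)
      qed (simp add: z_def Y_def zero_Kcone)
    qed
    show "\<forall>s\<in>{t+1..T}. \<forall>w\<in>Om. Y s w - Y (s+1) w \<in> Kcone rate s w"
    proof (intro ballI)
      fix s w assume s: "s \<in> {t+1..T}" and w: "w \<in> Om"
      show "Y s w - Y (s+1) w \<in> Kcone rate s w"
      proof (cases "w \<in> \<mu>")
        case False then show ?thesis by (simp add: Y_def zero_Kcone)
      next
        case True
        have nw: "nd w \<in> succ F t \<mu>" "w \<in> nd w" using nd[OF True] by auto
        note Yn = bspec[OF yy nw(1)]
        have yyn: "\<forall>w'\<in>Om. zz (nd w) w' - yy (nd w) (Suc t+1) w' \<in> Kcone rate (Suc t) w'"
            "\<forall>s\<in>{Suc t+1..T}. \<forall>w'\<in>Om. yy (nd w) s w' - yy (nd w) (s+1) w' \<in> Kcone rate s w'"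
          using Yn[THEN conjunct2, THEN conjunct2, THEN conjunct1]
            Yn[THEN conjunct2, THEN conjunct2, THEN conjunct2] by simp_all
        show ?thesis
        proof (cases "s = t+1")
          case True
          have "zz (nd w) w = c" using zz(2)[OF nw(1)] nw(2) by blast
          moreover have "zz (nd w) w - yy (nd w) (Suc t+1) w \<in> Kcone rate (Suc t) w" using yyn(1) w by blast
          ultimately show ?thesis using True \<open>w \<in> \<mu>\<close> by (simp add: Y_def)
        next
          case False
          then have "s \<in> {Suc t+1..T}" using s by auto
          then show ?thesis using yyn(2) w False \<open>w \<in> \<mu>\<close> by (simp add: Y_def)
        qed
      qed
    qed
  qed
  moreover have "\<forall>w\<in>\<mu>. z w = k + c" by (simp add: z_def)
  ultimately show ?thesis by (rule QnodeI)
qed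

lemma succ_fin: "t < T \<Longrightarrow> finite (succ F t \<mu>)"
  unfolding succ_def using finF[of "Suc t"] by auto

lemma Q_rec:
  assumes "t < T" "\<mu> \<in> F t" "w0 \<in> \<mu>"
  shows "Q t \<mu> = msum (Kcone rate t w0) (\<Inter>\<nu>\<in>succ F t \<mu>. Q (Suc t) \<nu>)"
proof
  show "Q t \<mu> \<subseteq> msum (Kcone rate t w0) (\<Inter>\<nu>\<in>succ F t \<mu>. Q (Suc t) \<nu>)"
  proof
    fix v assume "v \<in> Q t \<mu>"
    then obtain k c where "v = k + c" "k \<in> Kcone rate t w0" "\<forall>\<nu>\<in>succ F t \<mu>. c \<in> Q (Suc t) \<nu>"
      using Q_rec_sub[OF assms] by blast
    then show "v \<in> msum (Kcone rate t w0) (\<Inter>\<nu>\<in>succ F t \<mu>. Q (Suc t) \<nu>)" unfolding msum_def by blast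
  qed
  show "msum (Kcone rate t w0) (\<Inter>\<nu>\<in>succ F t \<mu>. Q (Suc t) \<nu>) \<subseteq> Q t \<mu>"
  proof
    fix v assume "v \<in> msum (Kcone rate t w0) (\<Inter>\<nu>\<in>succ F t \<mu>. Q (Suc t) \<nu>)"
    then obtain k c where "v = k + c" "k \<in> Kcone rate t w0" "\<forall>\<nu>\<in>succ F t \<mu>. c \<in> Q (Suc t) \<nu>"
      unfolding msum_def by blast
    then show "v \<in> Q t \<mu>" using Q_rec_sup[OF assms] by blast
  qed
qed

lemma Q_inter_sub:
  assumes "t < T" "\<mu> \<in> F t"
  shows "(\<Inter>\<nu>\<in>succ F t \<mu>. Q (Suc t) \<nu>) \<subseteq> Q t \<mu>"
proof
  fix c assume "c \<in> (\<Inter>\<nu>\<in>succ F t \<mu>. Q (Suc t) \<nu>)"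
  moreover obtain w0 where "w0 \<in> \<mu>" using atom_ne[of t \<mu>] assms by auto
  ultimately show "c \<in> Q t \<mu>" using Q_rec_sup[OF assms \<open>w0 \<in> \<mu>\<close> zero_Kcone] by simp
qed

lemma fgc_Q: "t \<le> T \<Longrightarrow> \<mu> \<in> F t \<Longrightarrow> fgc (Q t \<mu>)"
proof (induction "T - t" arbitrary: t \<mu>)
  case 0
  then have tT: "t = T" by simp
  obtain w0 where "w0 \<in> \<mu>" using atom_ne 0 by blast
  then show ?case using Q_T[of \<mu> w0] 0 tT fgc_Kcone by simp
next
  case (Suc n)
  then have tT: "t < T" by simp
  obtain w0 where w0: "w0 \<in> \<mu>" using atom_ne Suc by blast
  have "\<forall>\<nu>\<in>succ F t \<mu>. fgc (Q (Suc t) \<nu>)"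
    using Suc.hyps Suc.prems tT unfolding succ_def by auto
  then have "fgc (\<Inter>\<nu>\<in>succ F t \<mu>. Q (Suc t) \<nu>)" by (rule fgc_Inter(1)[OF succ_fin[OF tT]])
  then show ?case unfolding Q_rec[OF tT Suc.prems(2) w0] by (rule fgc_msum[OF fgc_Kcone])
qed

end


lemma sf_mono: "S \<subseteq> S' \<Longrightarrow> sf S y \<le> sf S' y"
  unfolding sf_def by (rule SUP_subset_mono) auto

lemma G3:
  assumes ne: "S \<noteq> {}" and cl: "\<forall>s\<in>S. \<forall>q\<in>Q. s + q \<in> S" and cc: "convex_cone Q"
    and y: "y \<notin> dualc Q"
  shows "sf S y = \<infinity>"
proof (rule ccontr)
  assume ninf: "sf S y \<noteq> \<infinity>"
  obtain s0 where s0: "s0 \<in> S" using ne by blast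
  obtain q where q: "q \<in> Q" "y \<bullet> q < 0" using y unfolding dualc_def by force
  have "sf S y > -\<infinity>" using sf_gt[OF ne] .
  then obtain R where R: "sf S y = ereal R" using ninf by (cases "sf S y") auto
  define c where "c = max 0 ((R + y \<bullet> s0 + 1) / (- (y \<bullet> q)))"
  have c0: "0 \<le> c" unfolding c_def by simp
  have "c * (- (y \<bullet> q)) \<ge> ((R + y \<bullet> s0 + 1) / (- (y \<bullet> q))) * (- (y \<bullet> q))"
    unfolding c_def using q(2) by (intro mult_right_mono) auto
  then have cge: "c * (- (y \<bullet> q)) \<ge> R + y \<bullet> s0 + 1" using q(2) by simp
  have "s0 + c *\<^sub>R q \<in> S" using cl s0 cone_scale[OF cc q(1) c0] by blast
  then have "ereal (- (y \<bullet> (s0 + c *\<^sub>R q))) \<le> ereal R" using sf_upper R by metis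
  then have "- (y \<bullet> (s0 + c *\<^sub>R q)) \<le> R" by simp
  moreover have "- (y \<bullet> (s0 + c *\<^sub>R q)) = - (y \<bullet> s0) + c * (- (y \<bullet> q))"
    by (simp add: inner_add_right)
  ultimately show False using cge by simp
qed

lemma G1:
  assumes cc: "convex_cone Q"
  shows "sf ((\<lambda>q. a + q) ` Q) y = (if y \<in> dualc Q then ereal (- (y \<bullet> a)) else \<infinity>)"
proof (cases "y \<in> dualc Q")
  case True
  have "sf ((\<lambda>q. a + q) ` Q) y \<le> ereal (- (y \<bullet> a))"
  proof (rule sf_least)
    fix x assume "x \<in> (\<lambda>q. a + q) ` Q"
    then obtain q where q: "q \<in> Q" "x = a + q" by blast
    have "0 \<le> y \<bullet> q" using True q(1) unfolding dualc_def by blast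
    then show "ereal (- (y \<bullet> x)) \<le> ereal (- (y \<bullet> a))" using q(2) by (simp add: inner_add_right)
  qed
  moreover have "ereal (- (y \<bullet> a)) \<le> sf ((\<lambda>q. a + q) ` Q) y"
  proof -
    have "a + 0 \<in> (\<lambda>q. a + q) ` Q" using cone_0[OF cc] by (rule imageI)
    then have "ereal (- (y \<bullet> (a + 0))) \<le> sf ((\<lambda>q. a + q) ` Q) y" by (rule sf_upper)
    then show ?thesis by simp
  qed
  ultimately show ?thesis using True by simp
next
  case False
  have "a + 0 \<in> (\<lambda>q. a + q) ` Q" using cone_0[OF cc] by (rule imageI)
  then have ne: "(\<lambda>q. a + q) ` Q \<noteq> {}" by blast
  have "\<forall>s\<in>(\<lambda>q. a + q) ` Q. \<forall>q\<in>Q. s + q \<in> (\<lambda>q. a + q) ` Q"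
  proof (intro ballI)
    fix s q assume "s \<in> (\<lambda>q. a + q) ` Q" "q \<in> Q"
    then obtain q' where "q' \<in> Q" "s = a + q'" by blast
    then have "s + q = a + (q' + q)" "q' + q \<in> Q" using cone_add[OF cc \<open>q' \<in> Q\<close> \<open>q \<in> Q\<close>]
      by (simp_all add: algebra_simps)
    then show "s + q \<in> (\<lambda>q. a + q) ` Q" by (metis imageI)
  qed
  then show ?thesis using G3[OF ne _ cc False] False by simp
qed

lemma G2:
  assumes ne: "W \<noteq> {}" and cc: "convex_cone Q"
  shows "sf (msum W Q) y = (if y \<in> dualc Q then sf W y else \<infinity>)"
proof (cases "y \<in> dualc Q")
  case True
  have "sf (msum W Q) y \<le> sf W y"
  proof (rule sf_least)
    fix x assume "x \<in> msum W Q"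
    then obtain w q where wq: "x = w + q" "w \<in> W" "q \<in> Q" unfolding msum_def by blast
    have "0 \<le> y \<bullet> q" using True wq(3) unfolding dualc_def by blast
    then have "ereal (- (y \<bullet> x)) \<le> ereal (- (y \<bullet> w))" using wq(1) by (simp add: inner_add_right)
    also have "\<dots> \<le> sf W y" using sf_upper[OF wq(2)] .
    finally show "ereal (- (y \<bullet> x)) \<le> sf W y" .
  qed
  moreover have "sf W y \<le> sf (msum W Q) y"
  proof (rule sf_mono)
    show "W \<subseteq> msum W Q"
    proof
      fix w assume "w \<in> W"
      then have "w = w + 0 \<and> w \<in> W \<and> 0 \<in> Q" using cone_0[OF cc] by simp
      then show "w \<in> msum W Q" unfolding msum_def by blast
    qed
  qed
  ultimately show ?thesis using True by simp
next
  case False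
  obtain w0 where w0: "w0 \<in> W" using ne by blast
  have "w0 + 0 \<in> msum W Q" using w0 cone_0[OF cc] unfolding msum_def by blast
  then have ne': "msum W Q \<noteq> {}" by blast
  have "\<forall>s\<in>msum W Q. \<forall>q\<in>Q. s + q \<in> msum W Q"
  proof (intro ballI)
    fix s q assume "s \<in> msum W Q" "q \<in> Q"
    then obtain w q' where "s = w + q'" "w \<in> W" "q' \<in> Q" unfolding msum_def by blast
    then have "s + q = w + (q' + q)" "w \<in> W" "q' + q \<in> Q" using cone_add[OF cc \<open>q' \<in> Q\<close> \<open>q \<in> Q\<close>]
      by (simp_all add: algebra_simps)
    then show "s + q \<in> msum W Q" unfolding msum_def by blast
  qed
  then show ?thesis using G3[OF ne' _ cc False] False by simp
qed

lemma dual_cone_eq: "dual_cone A = dualc A"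
  unfolding dual_cone_def dualc_def ..

lemma axis_inner: "(y::real^'n) \<bullet> axis k 1 = y $ k"
  by (simp add: cart_eq_inner_axis)

lemma dual_pos:
  fixes C :: "(real^'n) set"
  assumes "axis k 1 \<in> C" "y \<in> dualc C" shows "0 \<le> y $ k"
proof -
  have "0 \<le> y \<bullet> axis k 1" using assms unfolding dualc_def by blast
  then show ?thesis by (simp add: axis_inner)
qed

lemma dual_bnd:
  fixes C :: "(real^'n) set"
  assumes "r *\<^sub>R axis j 1 - axis k 1 \<in> C" "y \<in> dualc C" shows "y $ k \<le> r * y $ j"
proof -
  have "0 \<le> y \<bullet> (r *\<^sub>R axis j 1 - axis k 1)" using assms unfolding dualc_def by blast
  then show ?thesis by (simp add: inner_diff_right axis_inner)
qed

lemma dual_zero: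
  fixes C :: "(real^'n) set"
  assumes "\<forall>k. axis k 1 \<in> C" "\<forall>k. r k *\<^sub>R axis j 1 - axis k 1 \<in> C" "y \<in> dualc C" "y $ j = 0"
  shows "y = 0"
proof -
  have "y $ k = 0" for k
    using dual_pos[of k C y] dual_bnd[of "r k" j k C y] assms by simp
  then show ?thesis by (simp add: vec_eq_iff)
qed

lemma CG:
  assumes fg: "fgc C" and ax: "\<forall>k. axis k 1 \<in> C" and rk: "\<forall>k. r k *\<^sub>R axis j 1 - axis k 1 \<in> C"
    and nj: "- axis j 1 \<notin> C"
  shows "compactly_generated j (dual_cone C)"
proof -
  have cc: "convex_cone C" using fgc_convex_cone[OF fg] .
  have ccd: "convex_cone (dualc C)" by (rule dualc_convex_cone)
  obtain y0 where y0: "y0 \<in> dualc C" "y0 \<bullet> (- axis j 1) < 0"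
    using farkas[OF cc fgc_closed[OF fg] nj] by blast
  have y0j: "y0 $ j > 0" using y0(2) by (simp add: axis_inner)
  define s0 where "s0 = (1 / y0 $ j) *\<^sub>R y0"
  have s0: "s0 \<in> sigma_j j (dualc C)"
    unfolding sigma_j_def s0_def using cone_scale[OF ccd y0(1)] y0j by simp
  have cl: "closed (sigma_j j (dualc C))"
  proof -
    have "sigma_j j (dualc C) = dualc C \<inter> {x. axis j 1 \<bullet> x = 1}"
      unfolding sigma_j_def by (auto simp: axis_inner inner_commute)
    then show ?thesis using dualc_closed closed_hyperplane by (metis closed_Int)
  qed
  have bd: "bounded (sigma_j j (dualc C))"
    unfolding bounded_iff
  proof (intro exI ballI)
    fix x assume x: "x \<in> sigma_j j (dualc C)"
    have "norm x \<le> (\<Sum>k\<in>UNIV. \<bar>x $ k\<bar>)" by (rule norm_le_l1_cart)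
    also have "\<dots> \<le> (\<Sum>k\<in>UNIV. \<bar>r k\<bar>)"
    proof (rule sum_mono)
      fix k
      have "0 \<le> x $ k" using dual_pos[of k C x] ax x unfolding sigma_j_def by auto
      moreover have "x $ k \<le> r k" using dual_bnd[of "r k" j k C x] rk x unfolding sigma_j_def by auto
      ultimately show "\<bar>x $ k\<bar> \<le> \<bar>r k\<bar>" by simp
    qed
    finally show "norm x \<le> (\<Sum>k\<in>UNIV. \<bar>r k\<bar>)" .
  qed
  have gen: "dualc C = {c *\<^sub>R x | c x. 0 \<le> c \<and> x \<in> sigma_j j (dualc C)}"
  proof (intro set_eqI iffI)
    fix y assume y: "y \<in> dualc C"
    have yj: "0 \<le> y $ j" using dual_pos[of j C y] ax y by auto
    show "y \<in> {c *\<^sub>R x | c x. 0 \<le> c \<and> x \<in> sigma_j j (dualc C)}"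
    proof (cases "y $ j = 0")
      case True
      then have "y = 0" using dual_zero[OF ax rk y] by simp
      then have "y = 0 *\<^sub>R s0" by simp
      then show ?thesis using s0 by blast
    next
      case False
      then have pos: "y $ j > 0" using yj by simp
      have "(1 / y $ j) *\<^sub>R y \<in> sigma_j j (dualc C)"
        unfolding sigma_j_def using cone_scale[OF ccd y] pos by simp
      moreover have "y = (y $ j) *\<^sub>R ((1 / y $ j) *\<^sub>R y)" using pos by simp
      ultimately show ?thesis using yj by blast
    qed
  next
    fix y assume "y \<in> {c *\<^sub>R x | c x. 0 \<le> c \<and> x \<in> sigma_j j (dualc C)}"
    then obtain c x where "y = c *\<^sub>R x" "0 \<le> c" "x \<in> dualc C" unfolding sigma_j_def by blast
    then show "y \<in> dualc C" using cone_scale[OF ccd] by blast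
  qed
  show ?thesis unfolding compactly_generated_def dual_cone_eq
    using cl bd gen s0 compact_eq_bounded_closed by blast
qed

lemma conv_eq:
  fixes I :: "'i set"
  assumes fin: "finite I" and ne: "I \<noteq> {}" and reps: "\<forall>i\<in>I. rep (H i) (S i)"
    and S0ne: "(\<Inter>i\<in>I. S i) \<noteq> {}"
  shows "conv_fun I (\<lambda>i. sf (S i)) x = sf (\<Inter>i\<in>I. S i) x"
proof (rule antisym)
  define A where "A = {(l, xs). (\<forall>i\<in>I. 0 \<le> l i \<and> l i \<le> 1) \<and> sum l I = 1
                                  \<and> (\<Sum>i\<in>I. l i *\<^sub>R xs i) = x}"
  have Sne: "S i \<noteq> {}" if "i \<in> I" for i using S0ne that by blast
  have cf: "conv_fun I (\<lambda>i. sf (S i)) x = (INF p\<in>A. (\<Sum>i\<in>I. ereal (fst p i) * sf (S i) (snd p i)))"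
    unfolding conv_fun_def A_def ..
  show "sf (\<Inter>i\<in>I. S i) x \<le> conv_fun I (\<lambda>i. sf (S i)) x"
    unfolding cf
  proof (rule INF_greatest)
    fix p assume "p \<in> A"
    then obtain l xs where p: "p = (l, xs)" "\<forall>i\<in>I. 0 \<le> l i \<and> l i \<le> 1" "(\<Sum>i\<in>I. l i *\<^sub>R xs i) = x"
      unfolding A_def by auto
    have "sf (\<Inter>i\<in>I. S i) x \<le> (\<Sum>i\<in>I. sf (S i) (l i *\<^sub>R xs i))"
      by (rule sf_inter_le[OF fin p(3)]) blast
    also have "\<dots> = (\<Sum>i\<in>I. ereal (l i) * sf (S i) (xs i))"
    proof (rule sum.cong[OF refl])
      fix i assume i: "i \<in> I"
      then have "0 \<le> l i" using p(2) by blast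
      then show "sf (S i) (l i *\<^sub>R xs i) = ereal (l i) * sf (S i) (xs i)" by (rule sf_scale[OF Sne[OF i]])
    qed
    finally show "sf (\<Inter>i\<in>I. S i) x \<le> (\<Sum>i\<in>I. ereal (fst p i) * sf (S i) (snd p i))"
      using p(1) by simp
  qed
  show "conv_fun I (\<lambda>i. sf (S i)) x \<le> sf (\<Inter>i\<in>I. S i) x"
  proof (cases "sf (\<Inter>i\<in>I. S i) x = \<infinity>")
    case True then show ?thesis by simp
  next
    case False
    then have lt: "sf (\<Inter>i\<in>I. S i) x < \<infinity>" by (simp add: less_top)
    obtain yy where yy: "(\<Sum>i\<in>I. yy i) = x"
      "sf (\<Inter>i\<in>I. S i) x = (\<Sum>i\<in>I. sf (S i) (yy i))"
      using inf_conv_exact[OF fin ne reps S0ne lt] by blast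
    define n where "n = real (card I)"
    have npos: "n \<ge> 1" unfolding n_def using fin ne by (simp add: Suc_leI card_gt_0_iff)
    define p where "p = ((\<lambda>i::'i. 1 / n), (\<lambda>i. n *\<^sub>R yy i))"
    have "p \<in> A"
    proof -
      have "\<forall>i\<in>I. 0 \<le> 1 / n \<and> 1 / n \<le> 1" using npos by simp
      moreover have "(\<Sum>i\<in>I. 1 / n) = 1" using npos unfolding n_def by simp
      moreover have "(\<Sum>i\<in>I. (1 / n) *\<^sub>R (n *\<^sub>R yy i)) = x" using npos yy(1) by simp
      ultimately show ?thesis unfolding A_def p_def by simp
    qed
    then have "(INF p\<in>A. (\<Sum>i\<in>I. ereal (fst p i) * sf (S i) (snd p i)))
        \<le> (\<Sum>i\<in>I. ereal (fst p i) * sf (S i) (snd p i))" by (rule INF_lower)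
    also have "\<dots> = (\<Sum>i\<in>I. sf (S i) ((1 / n) *\<^sub>R (n *\<^sub>R yy i)))"
      unfolding p_def
    proof (rule sum.cong[OF refl])
      fix i assume i: "i \<in> I"
      have "0 \<le> 1 / n" using npos by simp
      then show "ereal (fst ((\<lambda>i::'i. 1 / n), (\<lambda>i. n *\<^sub>R yy i)) i) * sf (S i) (snd ((\<lambda>i::'i. 1 / n), (\<lambda>i. n *\<^sub>R yy i)) i)
          = sf (S i) ((1 / n) *\<^sub>R (n *\<^sub>R yy i))"
        using sf_scale[OF Sne[OF i], of "1/n" "n *\<^sub>R yy i"] by simp
    qed
    also have "\<dots> = sf (\<Inter>i\<in>I. S i) x" using yy(2) npos by simp
    finally show ?thesis unfolding cf .
  qed
qed


context setting begin

lemma no_neg_axis: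
  assumes tT: "t \<le> T" and \<mu>: "\<mu> \<in> F t"
  shows "- axis j 1 \<notin> Q t \<mu>"
proof
  assume "- axis j 1 \<in> Q t \<mu>"
  then obtain z where z: "z \<in> Qset Om F T rate t" "\<forall>w\<in>\<mu>. z w = - axis j 1" by (rule QnodeE)
  obtain y where y: "\<forall>s\<in>{t+1..T+1}. adapted F (s - 1) (y s)" "\<forall>w\<in>Om. y (T+1) w = 0"
    "\<forall>w\<in>Om. z w - y (t+1) w \<in> Kcone rate t w"
    "\<forall>s\<in>{t+1..T}. \<forall>w\<in>Om. y s w - y (s+1) w \<in> Kcone rate s w"
    using z(1) by (rule QsetE)
  define e :: "real^'d" where "e = axis j 1"
  define Y where "Y = (\<lambda>s w. if t + 1 \<le> s \<and> s \<le> T \<and> w \<in> \<mu> then y s w + e else (0::real^'d))"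
  define X where "X = (\<lambda>w. if w \<in> \<mu> then e else (0::real^'d))"
  have A: "\<forall>w\<in>Om. Y 0 w = 0" unfolding Y_def by simp
  have B: "\<forall>s\<in>{1..T+1}. adapted F (s - 1) (Y s)"
  proof
    fix s assume s: "s \<in> {1..T+1}"
    show "adapted F (s - 1) (Y s)"
    proof (cases "t + 1 \<le> s \<and> s \<le> T")
      case True
      have "s \<in> {t+1..T+1}" using True by simp
      then have ad: "adapted F (s - 1) (y s)" using y(1) by blast
      have "adapted F (s - 1) (\<lambda>w. y s w + e)"
        using ad unfolding adapted_def by metis
      moreover have "t \<le> s - 1" "s - 1 \<le> T" using True by auto
      ultimately have "adapted F (s - 1) (\<lambda>w. if w \<in> \<mu> then y s w + e else 0)"
        by (intro adapted_ind[OF _ _ \<mu>])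
      moreover have "Y s = (\<lambda>w. if w \<in> \<mu> then y s w + e else 0)" unfolding Y_def using True by auto
      ultimately show ?thesis by simp
    next
      case False
      then have "Y s = (\<lambda>w. 0)" unfolding Y_def by auto
      then show ?thesis by (simp add: adapted_const)
    qed
  qed
  have C: "\<forall>w\<in>Om. Y (T+1) w = 0" unfolding Y_def by simp
  have D: "\<forall>t'<T. \<forall>w\<in>Om. Y t' w - Y (t'+1) w \<in> Kcone rate t' w"
  proof (intro allI impI ballI)
    fix t' w assume t': "t' < T" and w: "w \<in> Om"
    show "Y t' w - Y (t'+1) w \<in> Kcone rate t' w"
    proof (cases "w \<in> \<mu>")
      case False then show ?thesis by (simp add: Y_def zero_Kcone)
    next
      case True
      consider "t' < t" | "t' = t" | "t + 1 \<le> t'" by linarith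
      then show ?thesis
      proof cases
        case 1 then show ?thesis by (simp add: Y_def zero_Kcone)
      next
        case 2
        have "z w - y (t+1) w \<in> Kcone rate t w" using y(3) w by blast
        moreover have "z w = - e" using z(2) True e_def by simp
        ultimately show ?thesis using 2 t' True by (simp add: Y_def algebra_simps)
      next
        case 3
        have "t' \<in> {t+1..T}" using 3 t' by simp
        then have "y t' w - y (t'+1) w \<in> Kcone rate t' w" using y(4) w by blast
        then show ?thesis using 3 t' True by (simp add: Y_def)
      qed
    qed
  qed
  have E: "\<forall>w\<in>Om. Y T w - X w \<in> Kcone rate T w"
  proof
    fix w assume w: "w \<in> Om"
    show "Y T w - X w \<in> Kcone rate T w"
    proof (cases "w \<in> \<mu>")
      case False then show ?thesis by (simp add: Y_def X_def zero_Kcone)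
    next
      case True
      show ?thesis
      proof (cases "t < T")
        case True': True
        have "T \<in> {t+1..T}" using True' by simp
        then have "y T w - y (T+1) w \<in> Kcone rate T w" using y(4) w by blast
        then show ?thesis using True True' y(2) w by (simp add: Y_def X_def)
      next
        case False
        then have tT': "t = T" using tT by simp
        have "z w - y (t+1) w \<in> Kcone rate t w" using y(3) w by blast
        moreover have "z w = - e" using z(2) True e_def by simp
        ultimately show ?thesis using tT' True y(2) w by (simp add: Y_def X_def)
      qed
    qed
  qed
  have Fx: "adapted F T X" unfolding X_def by (rule adapted_ind[OF tT order_refl \<mu> adapted_const])
  have G: "\<forall>w\<in>Om. \<forall>k. 0 \<le> X w $ k" unfolding X_def e_def by (simp add: axis_def)
  obtain w1 where w1: "w1 \<in> \<mu>" using atom_ne[OF tT \<mu>] by blast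
  have "w1 \<in> Om" using atom_sub[OF tT \<mu>] w1 by blast
  moreover have "X w1 \<noteq> 0" unfolding X_def e_def using w1 by (simp add: axis_eq_0_iff)
  ultimately have H: "\<exists>w\<in>Om. X w \<noteq> 0" by blast
  have "\<exists>(y :: nat \<Rightarrow> 'w \<Rightarrow> real^'d) (x :: 'w \<Rightarrow> real^'d).
        (\<forall>w\<in>Om. y 0 w = 0)
      \<and> (\<forall>s\<in>{1..T+1}. adapted F (s - 1) (y s))
      \<and> (\<forall>w\<in>Om. y (T+1) w = 0)
      \<and> (\<forall>t<T. \<forall>w\<in>Om. y t w - y (t+1) w \<in> Kcone rate t w)
      \<and> (\<forall>w\<in>Om. y T w - x w \<in> Kcone rate T w)
      \<and> adapted F T x
      \<and> (\<forall>w\<in>Om. \<forall>k. 0 \<le> x w $ k)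
      \<and> (\<exists>w\<in>Om. x w \<noteq> 0)"
    by (rule exI[of _ Y], rule exI[of _ X], intro conjI A B C D E Fx G H)
  moreover have "\<not> (\<exists>(y :: nat \<Rightarrow> 'w \<Rightarrow> real^'d) (x :: 'w \<Rightarrow> real^'d).
        (\<forall>w\<in>Om. y 0 w = 0)
      \<and> (\<forall>s\<in>{1..T+1}. adapted F (s - 1) (y s))
      \<and> (\<forall>w\<in>Om. y (T+1) w = 0)
      \<and> (\<forall>t<T. \<forall>w\<in>Om. y t w - y (t+1) w \<in> Kcone rate t w)
      \<and> (\<forall>w\<in>Om. y T w - x w \<in> Kcone rate T w)
      \<and> adapted F T x
      \<and> (\<forall>w\<in>Om. \<forall>k. 0 \<le> x w $ k)
      \<and> (\<exists>w\<in>Om. x w \<noteq> 0))" using NA unfolding no_arbitrage_def .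
  ultimately show False by (rule notE[rotated])
qed

abbreviation U where "U t \<mu> \<equiv> Uad Om F T rate xi t \<mu>"
abbreviation Z where "Z t \<mu> \<equiv> Zad Om F T rate xi t \<mu>"
abbreviation W where "W t \<mu> \<equiv> Wad Om F T rate xi t \<mu>"
abbreviation V where "V t \<mu> \<equiv> Vad Om F T rate xi t \<mu>"

lemma Z_T: "Z T \<mu> = U T \<mu>"
  unfolding Zad_def by simp

lemma W_lt: "t < T \<Longrightarrow> W t \<mu> = (\<Inter>\<nu>\<in>succ F t \<mu>. Z (Suc t) \<nu>)"
  unfolding Wad_def by simp

lemma V_lt: "t < T \<Longrightarrow> V t \<mu> = msum (W t \<mu>) (Q t \<mu>)"
  unfolding Vad_def msum_def by simp

lemma W_T: "W T \<mu> = U T \<mu>" unfolding Wad_def by simp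
lemma V_T: "V T \<mu> = U T \<mu>" unfolding Vad_def by simp

lemma Z_lt: "t < T \<Longrightarrow> Z t \<mu> = U t \<mu> \<inter> V t \<mu>"
proof -
  assume tT: "t < T"
  define n where "n = T - Suc t"
  have n: "T - t = Suc n" "T - Suc n = t" "T - Suc t = n" using tT unfolding n_def by auto
  have "Z t \<mu> = Zrec Om F T rate xi (Suc n) \<mu>" unfolding Zad_def n(1) ..
  also have "\<dots> = U t \<mu> \<inter> {w + q | w q. w \<in> (\<Inter>\<nu>\<in>succ F t \<mu>. Zrec Om F T rate xi n \<nu>)
                 \<and> q \<in> Q t \<mu>}" unfolding Zrec.simps n(2) ..
  also have "(\<Inter>\<nu>\<in>succ F t \<mu>. Zrec Om F T rate xi n \<nu>) = W t \<mu>"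
    unfolding W_lt[OF tT] Zad_def n(3) ..
  finally show ?thesis unfolding Vad_def using tT by simp
qed

lemma xi_ad: "t \<le> T \<Longrightarrow> adapted F t (xi t)"
  using opt unfolding american_option_def by blast

lemma cc_Q: "t \<le> T \<Longrightarrow> \<mu> \<in> F t \<Longrightarrow> convex_cone (Q t \<mu>)"
  using fgc_Q fgc_convex_cone by blast

definition mv :: "real^'d" where
  "mv = (\<chi> k. \<Sum>s\<in>{..T}. \<Sum>w\<in>Om. \<bar>xi s w $ k\<bar>)"

lemma mv_ge:
  assumes "s \<le> T" "w \<in> Om" shows "\<forall>k. 0 \<le> (mv - xi s w) $ k"
proof
  fix k
  have "\<bar>xi s w $ k\<bar> \<le> (\<Sum>w\<in>Om. \<bar>xi s w $ k\<bar>)"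
    by (rule member_le_sum[OF assms(2)]) (auto simp: finOm)
  also have "\<dots> \<le> (\<Sum>s\<in>{..T}. \<Sum>w\<in>Om. \<bar>xi s w $ k\<bar>)"
    by (rule member_le_sum[of s "{..T}" "\<lambda>s. \<Sum>w\<in>Om. \<bar>xi s w $ k\<bar>"]) (use assms in \<open>auto intro: sum_nonneg\<close>)
  finally show "0 \<le> (mv - xi s w) $ k" unfolding mv_def by simp
qed

lemma mv_U:
  assumes tT: "t \<le> T" and \<mu>: "\<mu> \<in> F t" shows "mv \<in> U t \<mu>"
proof -
  obtain w0 where w0: "w0 \<in> \<mu>" using atom_ne[OF tT \<mu>] by blast
  have w0Om: "w0 \<in> Om" using atom_sub[OF tT \<mu>] w0 by blast
  have a: "atnode (xi t) \<mu> = xi t w0" by (rule atnode_eq[OF xi_ad[OF tT] \<mu> w0])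
  have "mv - xi t w0 \<in> Kcone rate t w0" using mv_ge[OF tT w0Om] by (rule nonneg_Kcone)
  then have "mv - xi t w0 \<in> Q t \<mu>" using QK[OF tT \<mu> w0] by blast
  then have "atnode (xi t) \<mu> + (mv - xi t w0) \<in> U t \<mu>" unfolding Uad_def by (rule imageI)
  then show ?thesis using a by simp
qed

lemma mv_Z: "t \<le> T \<Longrightarrow> \<mu> \<in> F t \<Longrightarrow> mv \<in> Z t \<mu>"
proof (induction "T - t" arbitrary: t \<mu>)
  case 0
  then have "t = T" by simp
  then show ?case using mv_U 0 Z_T by simp
next
  case (Suc n)
  then have tT: "t < T" by simp
  have "mv \<in> W t \<mu>" unfolding W_lt[OF tT]
    using Suc.hyps Suc.prems tT unfolding succ_def by auto
  moreover have "0 \<in> Q t \<mu>" using cc_Q[of t \<mu>] Suc.prems cone_0 by blast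
  ultimately have "mv + 0 \<in> V t \<mu>" unfolding V_lt[OF tT] msum_def by blast
  then show ?case using mv_U[OF Suc.prems] Z_lt[OF tT] by simp
qed

lemma mv_W: "t < T \<Longrightarrow> \<mu> \<in> F t \<Longrightarrow> mv \<in> W t \<mu>"
  unfolding W_lt using mv_Z unfolding succ_def by auto

lemma ne_Z: "t \<le> T \<Longrightarrow> \<mu> \<in> F t \<Longrightarrow> Z t \<mu> \<noteq> {}" using mv_Z by blast
lemma ne_U: "t \<le> T \<Longrightarrow> \<mu> \<in> F t \<Longrightarrow> U t \<mu> \<noteq> {}" using mv_U by blast
lemma ne_W: "t \<le> T \<Longrightarrow> \<mu> \<in> F t \<Longrightarrow> W t \<mu> \<noteq> {}"
  using mv_W mv_U W_T by (metis empty_iff le_neq_implies_less)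

lemma rep_Int2: "rep H S \<Longrightarrow> rep H' S' \<Longrightarrow> rep (H \<inter> H') (S \<inter> S')"
proof -
  assume r: "rep H S" "rep H' S'"
  have "rep (\<Inter>b\<in>UNIV. if b then H else H') (\<Inter>b\<in>UNIV. if b then S else S')"
    using r by (intro rep_Inter) auto
  moreover have "(\<Inter>b\<in>UNIV. if b then H else H') = H \<inter> H'" by (auto simp: UNIV_bool)
  moreover have "(\<Inter>b\<in>UNIV. if b then S else S') = S \<inter> S'" by (auto simp: UNIV_bool)
  ultimately show ?thesis by simp
qed

lemma rep_U: "t \<le> T \<Longrightarrow> \<mu> \<in> F t \<Longrightarrow> \<exists>H. rep H (U t \<mu>)"
  unfolding Uad_def using fgc_Q by (intro rep_translate) blast

lemma rep_Z: "t \<le> T \<Longrightarrow> \<mu> \<in> F t \<Longrightarrow> \<exists>H. rep H (Z t \<mu>)"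
proof (induction "T - t" arbitrary: t \<mu>)
  case 0
  then have "t = T" by simp
  then show ?case using rep_U 0 Z_T by simp
next
  case (Suc n)
  then have tT: "t < T" by simp
  have "\<forall>\<nu>\<in>succ F t \<mu>. \<exists>H. rep H (Z (Suc t) \<nu>)"
    using Suc.hyps Suc.prems tT unfolding succ_def by auto
  then obtain HH where HH: "\<forall>\<nu>\<in>succ F t \<mu>. rep (HH \<nu>) (Z (Suc t) \<nu>)" by metis
  obtain w0 where "w0 \<in> \<mu>" using atom_ne Suc.prems by blast
  then have sne: "succ F t \<mu> \<noteq> {}" using succ_of[OF tT Suc.prems(2)] by blast
  have "rep (\<Inter>\<nu>\<in>succ F t \<mu>. HH \<nu>) (W t \<mu>)"
    unfolding W_lt[OF tT] by (rule rep_Inter[OF succ_fin[OF tT] sne HH])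
  then have "rep (msum (\<Inter>\<nu>\<in>succ F t \<mu>. HH \<nu>) ((\<lambda>q. (q, 0)) ` Q t \<mu>)) (V t \<mu>)"
    unfolding V_lt[OF tT] by (rule rep_msum[OF _ fgc_Q[OF _ Suc.prems(2)]]) (use tT in simp)
  moreover obtain H where "rep H (U t \<mu>)" using rep_U Suc.prems by blast
  ultimately show ?case unfolding Z_lt[OF tT] by (meson rep_Int2)
qed

lemma Z_closed:
  assumes "t \<le> T" "\<mu> \<in> F t"
  shows "\<forall>s\<in>Z t \<mu>. \<forall>q\<in>Q t \<mu>. s + q \<in> Z t \<mu>"
proof -
  have cc: "convex_cone (Q t \<mu>)" using cc_Q assms by blast
  have Ucl: "s + q \<in> U t \<mu>" if sU: "s \<in> U t \<mu>" and qQ: "q \<in> Q t \<mu>" for s q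
  proof -
    obtain q' where "q' \<in> Q t \<mu>" "s = atnode (xi t) \<mu> + q'" using sU unfolding Uad_def by blast
    then have "s + q = atnode (xi t) \<mu> + (q' + q)" "q' + q \<in> Q t \<mu>"
      using cone_add[OF cc _ qQ] by (simp_all add: algebra_simps)
    then show ?thesis unfolding Uad_def by (metis imageI)
  qed
  show ?thesis
  proof (cases "t < T")
    case True
    have Vcl: "s + q \<in> V t \<mu>" if sV: "s \<in> V t \<mu>" and qQ: "q \<in> Q t \<mu>" for s q
    proof -
      obtain w q' where "s = w + q'" "w \<in> W t \<mu>" "q' \<in> Q t \<mu>"
        using sV unfolding V_lt[OF True] msum_def by blast
      then have "s + q = w + (q' + q)" "w \<in> W t \<mu>" "q' + q \<in> Q t \<mu>"
        using cone_add[OF cc _ qQ] by (simp_all add: algebra_simps)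
      then show ?thesis unfolding V_lt[OF True] msum_def by blast
    qed
    show ?thesis unfolding Z_lt[OF True] using Ucl Vcl by blast
  next
    case False
    then have "t = T" using assms by simp
    then show ?thesis using Ucl Z_T by simp
  qed
qed

end


context setting begin

lemma Ufun_eq: "Ufun Om F T rate xi t \<mu> = sf (U t \<mu>)"
  by (rule ext) (simp add: Ufun_def support_fun_neg)
lemma Vfun_eq: "Vfun Om F T rate xi t \<mu> = sf (V t \<mu>)"
  by (rule ext) (simp add: Vfun_def support_fun_neg)
lemma Wfun_eq: "Wfun Om F T rate xi t \<mu> = sf (W t \<mu>)"
  by (rule ext) (simp add: Wfun_def support_fun_neg)
lemma Zfun_eq: "Zfun Om F T rate xi t \<mu> = sf (Z t \<mu>)"
  by (rule ext) (simp add: Zfun_def support_fun_neg)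

lemma Q_axis: "t \<le> T \<Longrightarrow> \<mu> \<in> F t \<Longrightarrow> axis k 1 \<in> Q t \<mu>"
proof -
  assume a: "t \<le> T" "\<mu> \<in> F t"
  obtain w0 where w0: "w0 \<in> \<mu>" using atom_ne a by blast
  show ?thesis using QK[OF a w0] axis_Kcone[of k rate t w0] by (rule subsetD)
qed

lemma Q_rate: "t \<le> T \<Longrightarrow> \<mu> \<in> F t \<Longrightarrow> \<exists>r. \<forall>k. r k *\<^sub>R axis j 1 - axis k 1 \<in> Q t \<mu>"
proof -
  assume a: "t \<le> T" "\<mu> \<in> F t"
  obtain w0 where w0: "w0 \<in> \<mu>" using atom_ne a by blast
  have "\<forall>k. rate t w0 j k *\<^sub>R axis j 1 - axis k 1 \<in> Q t \<mu>"
    using QK[OF a w0] rate_Kcone[of rate t w0 j] by (intro allI) (rule subsetD)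
  then show ?thesis by blast
qed

lemma claim1: "t \<le> T \<Longrightarrow> \<mu> \<in> F t \<Longrightarrow> compactly_generated j (dual_cone (Q t \<mu>))"
proof -
  assume a: "t \<le> T" "\<mu> \<in> F t"
  obtain r where r: "\<forall>k. r k *\<^sub>R axis j 1 - axis k 1 \<in> Q t \<mu>" using Q_rate[OF a] by blast
  have "\<forall>k. axis k 1 \<in> Q t \<mu>" using Q_axis[OF a] by (intro allI)
  then show ?thesis by (rule CG[OF fgc_Q[OF a] _ r no_neg_axis[OF a]])
qed

lemma sig_ne: "t \<le> T \<Longrightarrow> \<mu> \<in> F t \<Longrightarrow> \<exists>s. s \<in> sigma_j j (dualc (Q t \<mu>))"
proof -
  assume a: "t \<le> T" "\<mu> \<in> F t"
  have "sigma_j j (dualc (Q t \<mu>)) \<noteq> {}" using claim1[OF a] unfolding compactly_generated_def dual_cone_eq by (elim conjE)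
  then show ?thesis by blast
qed

lemma Qd_pos: "t \<le> T \<Longrightarrow> \<mu> \<in> F t \<Longrightarrow> y \<in> dualc (Q t \<mu>) \<Longrightarrow> 0 \<le> y $ k"
  by (rule dual_pos[OF Q_axis])

lemma Qd_zero: "t \<le> T \<Longrightarrow> \<mu> \<in> F t \<Longrightarrow> y \<in> dualc (Q t \<mu>) \<Longrightarrow> y $ j = 0 \<Longrightarrow> y = 0"
proof -
  assume a: "t \<le> T" "\<mu> \<in> F t" and y: "y \<in> dualc (Q t \<mu>)" "y $ j = 0"
  obtain r where r: "\<forall>k. r k *\<^sub>R axis j 1 - axis k 1 \<in> Q t \<mu>" using Q_rate[OF a] by blast
  have "\<forall>k. axis k 1 \<in> Q t \<mu>" using Q_axis[OF a] by (intro allI)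
  then show "y = 0" by (rule dual_zero[OF _ r y])
qed

lemma U_formula:
  assumes "t \<le> T" "\<mu> \<in> F t"
  shows "sf (U t \<mu>) y = (if y \<in> dualc (Q t \<mu>) then ereal (- (y \<bullet> atnode (xi t) \<mu>)) else \<infinity>)"
  unfolding Uad_def by (rule G1[OF cc_Q[OF assms]])

lemma V_formula:
  assumes "t \<le> T" "\<mu> \<in> F t"
  shows "sf (V t \<mu>) y = (if y \<in> dualc (Q t \<mu>) then sf (W t \<mu>) y else \<infinity>)"
proof (cases "t < T")
  case True
  show ?thesis unfolding V_lt[OF True] by (rule G2[OF ne_W[OF assms] cc_Q[OF assms]])
next
  case False
  then have tT: "t = T" using assms by simp
  show ?thesis using U_formula[OF assms, of y] tT V_T W_T by auto
qed

lemma Z_sub_U: "t \<le> T \<Longrightarrow> Z t \<mu> \<subseteq> U t \<mu>"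
proof -
  assume "t \<le> T"
  then consider "t < T" | "t = T" by linarith
  then show ?thesis
  proof cases
    case 1 show ?thesis unfolding Z_lt[OF 1] by (rule Int_lower1)
  next
    case 2 then show ?thesis using Z_T by simp
  qed
qed

lemma domZ:
  assumes "t \<le> T" "\<mu> \<in> F t"
  shows "sf (Z t \<mu>) y < \<infinity> \<longleftrightarrow> y \<in> dualc (Q t \<mu>)"
proof
  assume "sf (Z t \<mu>) y < \<infinity>"
  then have "sf (Z t \<mu>) y \<noteq> \<infinity>" by simp
  then show "y \<in> dualc (Q t \<mu>)"
    using G3[OF ne_Z[OF assms] Z_closed[OF assms] cc_Q[OF assms], of y] by blast
next
  assume y: "y \<in> dualc (Q t \<mu>)"
  have "sf (Z t \<mu>) y \<le> sf (U t \<mu>) y" using Z_sub_U[OF assms(1)] by (rule sf_mono)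
  also have "\<dots> = ereal (- (y \<bullet> atnode (xi t) \<mu>))" using U_formula[OF assms] y by simp
  finally have "sf (Z t \<mu>) y \<le> ereal (- (y \<bullet> atnode (xi t) \<mu>))" .
  moreover have "ereal (- (y \<bullet> atnode (xi t) \<mu>)) < \<infinity>" by simp
  ultimately show "sf (Z t \<mu>) y < \<infinity>" by (rule le_less_trans)
qed

lemma succ_sub: "\<nu> \<in> succ F t \<mu> \<Longrightarrow> \<nu> \<in> F (Suc t)"
  unfolding succ_def by blast

lemma succ_ne: "t < T \<Longrightarrow> \<mu> \<in> F t \<Longrightarrow> succ F t \<mu> \<noteq> {}"
proof -
  assume a: "t < T" "\<mu> \<in> F t"
  have "\<mu> \<noteq> {}" using atom_ne[of t \<mu>] a by simp
  then obtain w0 where "w0 \<in> \<mu>" by blast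
  then show ?thesis using succ_of[OF a] by blast
qed

lemma rep_W: "t < T \<Longrightarrow> \<mu> \<in> F t \<Longrightarrow> \<exists>HH. \<forall>\<nu>\<in>succ F t \<mu>. rep (HH \<nu>) (Z (Suc t) \<nu>)"
proof -
  assume a: "t < T" "\<mu> \<in> F t"
  have "\<forall>\<nu>\<in>succ F t \<mu>. \<exists>H. rep H (Z (Suc t) \<nu>)"
  proof
    fix \<nu> assume "\<nu> \<in> succ F t \<mu>"
    then have "\<nu> \<in> F (Suc t)" by (rule succ_sub)
    moreover have "Suc t \<le> T" using a by simp
    ultimately show "\<exists>H. rep H (Z (Suc t) \<nu>)" using rep_Z by blast
  qed
  then show ?thesis by (rule bchoice)
qed

lemma rep_V: "t < T \<Longrightarrow> \<mu> \<in> F t \<Longrightarrow> \<exists>H. rep H (V t \<mu>)"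
proof -
  assume a: "t < T" "\<mu> \<in> F t"
  obtain HH where HH: "\<forall>\<nu>\<in>succ F t \<mu>. rep (HH \<nu>) (Z (Suc t) \<nu>)" using rep_W[OF a] by blast
  have "rep (\<Inter>\<nu>\<in>succ F t \<mu>. HH \<nu>) (W t \<mu>)"
    unfolding W_lt[OF a(1)] by (rule rep_Inter[OF succ_fin[OF a(1)] succ_ne[OF a] HH])
  then have "rep (msum (\<Inter>\<nu>\<in>succ F t \<mu>. HH \<nu>) ((\<lambda>q. (q, 0)) ` Q t \<mu>)) (V t \<mu>)"
    unfolding V_lt[OF a(1)] by (rule rep_msum[OF _ fgc_Q[OF _ a(2)]]) (use a in simp)
  then show ?thesis by blast
qed

lemma domW:
  assumes tT: "t < T" and \<mu>: "\<mu> \<in> F t" and y: "y \<in> dualc (Q t \<mu>)"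
  shows "sf (W t \<mu>) y < \<infinity>"
proof -
  have fs: "finite (succ F t \<mu>)" by (rule succ_fin[OF tT])
  have fq: "\<forall>\<nu>\<in>succ F t \<mu>. fgc (Q (Suc t) \<nu>)"
  proof
    fix \<nu> assume "\<nu> \<in> succ F t \<mu>"
    then have "\<nu> \<in> F (Suc t)" by (rule succ_sub)
    moreover have "Suc t \<le> T" using tT by simp
    ultimately show "fgc (Q (Suc t) \<nu>)" using fgc_Q by blast
  qed
  have "dualc (Q t \<mu>) \<subseteq> dualc (\<Inter>\<nu>\<in>succ F t \<mu>. Q (Suc t) \<nu>)"
    using Q_inter_sub[OF tT \<mu>] unfolding dualc_def by blast
  also have "\<dots> = fsum (succ F t \<mu>) (\<lambda>\<nu>. dualc (Q (Suc t) \<nu>))" by (rule fgc_Inter(2)[OF fs fq])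
  finally have "y \<in> fsum (succ F t \<mu>) (\<lambda>\<nu>. dualc (Q (Suc t) \<nu>))" using y by blast
  then obtain yy where yy: "y = (\<Sum>\<nu>\<in>succ F t \<mu>. yy \<nu>)" "\<forall>\<nu>\<in>succ F t \<mu>. yy \<nu> \<in> dualc (Q (Suc t) \<nu>)"
    unfolding fsum_def by blast
  have "sf (W t \<mu>) y \<le> (\<Sum>\<nu>\<in>succ F t \<mu>. sf (Z (Suc t) \<nu>) (yy \<nu>))"
    unfolding W_lt[OF tT] by (rule sf_inter_le[OF fs yy(1)[symmetric]]) blast
  moreover have "(\<Sum>\<nu>\<in>succ F t \<mu>. sf (Z (Suc t) \<nu>) (yy \<nu>)) \<noteq> \<infinity>"
  proof -
    have "\<forall>\<nu>\<in>succ F t \<mu>. sf (Z (Suc t) \<nu>) (yy \<nu>) \<noteq> \<infinity>"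
    proof
      fix \<nu> assume n: "\<nu> \<in> succ F t \<mu>"
      then have "\<nu> \<in> F (Suc t)" by (rule succ_sub)
      moreover have "Suc t \<le> T" using tT by simp
      ultimately have "sf (Z (Suc t) \<nu>) (yy \<nu>) < \<infinity>" using domZ yy(2) n by blast
      then show "sf (Z (Suc t) \<nu>) (yy \<nu>) \<noteq> \<infinity>" by simp
    qed
    then show ?thesis unfolding sum_Pinfty by blast
  qed
  ultimately show ?thesis using less_top order_le_less_trans by blast
qed

lemma claim2:
  assumes "t \<le> T" "\<mu> \<in> F t"
  shows "Ufun Om F T rate xi t \<mu> y =
          (if y \<in> dual_cone (Q t \<mu>) then ereal (- (y \<bullet> atnode (xi t) \<mu>)) else \<infinity>)
      \<and> Vfun Om F T rate xi t \<mu> y =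
          (if y \<in> dual_cone (Q t \<mu>) then Wfun Om F T rate xi t \<mu> y else \<infinity>)"
  unfolding Ufun_eq Vfun_eq Wfun_eq dual_cone_eq using U_formula[OF assms] V_formula[OF assms] by blast

lemma claim3a:
  assumes "t \<le> T" "\<mu> \<in> F t"
  shows "edom (Zfun Om F T rate xi t \<mu>) = dual_cone (Q t \<mu>)"
  unfolding Zfun_eq dual_cone_eq edom_def using domZ[OF assms] by blast

lemma ne_V: "t \<le> T \<Longrightarrow> \<mu> \<in> F t \<Longrightarrow> V t \<mu> \<noteq> {}"
proof -
  assume a: "t \<le> T" "\<mu> \<in> F t"
  show ?thesis
  proof (cases "t < T")
    case True
    have "mv + 0 \<in> msum (W t \<mu>) (Q t \<mu>)"
      using mv_W[OF True a(2)] cone_0[OF cc_Q[OF a]] unfolding msum_def by blast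
    then show ?thesis unfolding V_lt[OF True] by blast
  next
    case False
    then have "t = T" using a by simp
    then show ?thesis using V_T ne_U a by simp
  qed
qed

lemma sum_bool: "(\<Sum>b\<in>(UNIV::bool set). f b) = f True + f False"
  by (simp add: UNIV_bool add.commute)

lemma claim3b:
  assumes tT: "t < T" and \<mu>: "\<mu> \<in> F t"
  shows "Zfun Om F T rate xi t \<mu> =
          conv_fun (UNIV :: bool set) (\<lambda>b. if b then Ufun Om F T rate xi t \<mu> else Vfun Om F T rate xi t \<mu>)"
proof -
  have t: "t \<le> T" using tT by simp
  obtain HU where HU: "rep HU (U t \<mu>)" using rep_U[OF t \<mu>] by blast
  obtain HV where HV: "rep HV (V t \<mu>)" using rep_V[OF tT \<mu>] by blast
  define S where "S b = (if b then U t \<mu> else V t \<mu>)" for b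
  define H where "H b = (if b then HU else HV)" for b
  have reps: "\<forall>b\<in>UNIV. rep (H b) (S b)" unfolding S_def H_def using HU HV by simp
  have SZ: "(\<Inter>b\<in>UNIV. S b) = Z t \<mu>" unfolding S_def Z_lt[OF tT] by (auto simp: UNIV_bool)
  have fe: "(\<lambda>b. if b then Ufun Om F T rate xi t \<mu> else Vfun Om F T rate xi t \<mu>) = (\<lambda>b. sf (S b))"
    by (rule ext) (simp add: S_def Ufun_eq Vfun_eq)
  have "conv_fun (UNIV :: bool set) (\<lambda>b. sf (S b)) x = sf (Z t \<mu>) x" for x
    using conv_eq[of UNIV H S x] reps SZ ne_Z[OF t \<mu>] by simp
  then show ?thesis unfolding fe Zfun_eq by (intro ext) simp
qed

lemma scale_piece:
  assumes ne: "S \<noteq> {}" and a0: "0 \<le> a $ j" and az: "a $ j = 0 \<Longrightarrow> a = 0"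
  shows "ereal (a $ j) * sf S (if 0 < a $ j then (1 / a $ j) *\<^sub>R a else s0) = sf S a
       \<and> (a $ j) *\<^sub>R (if 0 < a $ j then (1 / a $ j) *\<^sub>R a else s0) = a"
proof (cases "0 < a $ j")
  case True
  have "sf S ((a $ j) *\<^sub>R ((1 / a $ j) *\<^sub>R a)) = ereal (a $ j) * sf S ((1 / a $ j) *\<^sub>R a)"
    using sf_scale[OF ne a0] by blast
  moreover have "(a $ j) *\<^sub>R ((1 / a $ j) *\<^sub>R a) = a" using True by simp
  ultimately show ?thesis using True by simp
next
  case False
  then have "a $ j = 0" using a0 by simp
  then have "a = 0" using az by simp
  then show ?thesis using False sf_zero[OF ne] \<open>a $ j = 0\<close> by simp
qed

lemma claim3c:
  assumes tT: "t < T" and \<mu>: "\<mu> \<in> F t"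
  shows "\<forall>y\<in>sigma_j j (dual_cone (Q t \<mu>)).
           \<exists>lam\<in>{0..1::real}. \<exists>x\<in>sigma_j j (edom (Vfun Om F T rate xi t \<mu>)).
           \<exists>s\<in>sigma_j j (dual_cone (Q t \<mu>)).
             Zfun Om F T rate xi t \<mu> y = ereal lam * Ufun Om F T rate xi t \<mu> s
                                     + ereal (1 - lam) * Vfun Om F T rate xi t \<mu> x
           \<and> y = lam *\<^sub>R s + (1 - lam) *\<^sub>R x"
  unfolding Zfun_eq Ufun_eq Vfun_eq dual_cone_eq
proof
  fix y assume ys: "y \<in> sigma_j j (dualc (Q t \<mu>))"
  have t: "t \<le> T" using tT by simp
  have y: "y \<in> dualc (Q t \<mu>)" "y $ j = 1" using ys unfolding sigma_j_def by auto
  obtain HU where HU: "rep HU (U t \<mu>)" using rep_U[OF t \<mu>] by blast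
  obtain HV where HV: "rep HV (V t \<mu>)" using rep_V[OF tT \<mu>] by blast
  define S where "S b = (if b then U t \<mu> else V t \<mu>)" for b
  define H where "H b = (if b then HU else HV)" for b
  have reps: "\<forall>b\<in>UNIV. rep (H b) (S b)" unfolding S_def H_def using HU HV by simp
  have SZ: "(\<Inter>b\<in>UNIV. S b) = Z t \<mu>" unfolding S_def Z_lt[OF tT] by (auto simp: UNIV_bool)
  have fin: "sf (\<Inter>b\<in>UNIV. S b) y < \<infinity>" unfolding SZ using domZ[OF t \<mu>] y(1) by blast
  have ne0: "(\<Inter>b\<in>UNIV. S b) \<noteq> {}" unfolding SZ by (rule ne_Z[OF t \<mu>])
  obtain yy where yy: "(\<Sum>b\<in>UNIV. yy b) = y"
      "\<forall>b\<in>UNIV. sf (S b) (yy b) < \<infinity> \<and> sf (S b) (yy b) > -\<infinity>"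
      "sf (\<Inter>b\<in>UNIV. S b) y = (\<Sum>b\<in>UNIV. sf (S b) (yy b))"
    using inf_conv_exact[OF finite_class.finite_UNIV _ reps ne0 fin] by blast
  define a where "a = yy True"
  define b where "b = yy False"
  have ab: "a + b = y" using yy(1) unfolding a_def b_def sum_bool .
  have "sf (Z t \<mu>) y = (\<Sum>b\<in>UNIV. sf (S b) (yy b))" using yy(3) SZ by simp
  then have Zy: "sf (Z t \<mu>) y = sf (U t \<mu>) a + sf (V t \<mu>) b"
    unfolding sum_bool a_def b_def S_def by simp
  have yT: "sf (S True) (yy True) < \<infinity>" using yy(2) by blast
  have yF: "sf (S False) (yy False) < \<infinity> \<and> sf (S False) (yy False) > -\<infinity>" using yy(2) by blast
  have Ua: "sf (U t \<mu>) a < \<infinity>" using yT unfolding a_def S_def by simp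
  have Vb: "sf (V t \<mu>) b < \<infinity>" "sf (V t \<mu>) b > -\<infinity>" using yF unfolding b_def S_def by simp_all
  have aQ: "a \<in> dualc (Q t \<mu>)"
  proof (rule ccontr)
    assume "a \<notin> dualc (Q t \<mu>)"
    then have "sf (U t \<mu>) a = \<infinity>" using U_formula[OF t \<mu>] by simp
    then show False using Ua by simp
  qed
  have bQ: "b \<in> dualc (Q t \<mu>)"
  proof (rule ccontr)
    assume "b \<notin> dualc (Q t \<mu>)"
    then have "sf (V t \<mu>) b = \<infinity>" using V_formula[OF t \<mu>] by simp
    then show False using Vb by simp
  qed
  have a0: "0 \<le> a $ j" by (rule Qd_pos[OF t \<mu> aQ])
  have b0: "0 \<le> b $ j" by (rule Qd_pos[OF t \<mu> bQ])
  have abj: "a $ j + b $ j = 1" using ab y(2) by (metis vector_add_component)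
  obtain s0 where s0: "s0 \<in> sigma_j j (dualc (Q t \<mu>))" using sig_ne[OF t \<mu>] by blast
  obtain x0 where x0: "x0 \<in> sigma_j j (dualc (Q t \<mu>))" using sig_ne[OF t \<mu>] by blast
  have x0V: "x0 \<in> sigma_j j (edom (sf (V t \<mu>)))"
  proof -
    have "x0 \<in> dualc (Q t \<mu>)" "x0 $ j = 1" using x0 unfolding sigma_j_def by auto
    moreover have "sf (W t \<mu>) x0 < \<infinity>" using domW[OF tT \<mu>] x0 unfolding sigma_j_def by blast
    ultimately show ?thesis unfolding sigma_j_def edom_def using V_formula[OF t \<mu>] by simp
  qed
  define lam where "lam = a $ j"
  define s where "s = (if 0 < a $ j then (1 / a $ j) *\<^sub>R a else s0)"
  define x where "x = (if 0 < b $ j then (1 / b $ j) *\<^sub>R b else x0)"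
  have PA: "ereal (a $ j) * sf (U t \<mu>) s = sf (U t \<mu>) a \<and> (a $ j) *\<^sub>R s = a"
    unfolding s_def by (rule scale_piece[OF ne_U[OF t \<mu>] a0 Qd_zero[OF t \<mu> aQ]])
  have PB: "ereal (b $ j) * sf (V t \<mu>) x = sf (V t \<mu>) b \<and> (b $ j) *\<^sub>R x = b"
    unfolding x_def by (rule scale_piece[OF ne_V[OF t \<mu>] b0 Qd_zero[OF t \<mu> bQ]])
  have bj: "b $ j = 1 - lam" using abj unfolding lam_def by simp
  have sS: "s \<in> sigma_j j (dualc (Q t \<mu>))"
  proof (cases "0 < a $ j")
    case True
    have "(1 / a $ j) *\<^sub>R a \<in> dualc (Q t \<mu>)"
      using cone_scale[OF dualc_convex_cone aQ] True by simp
    then show ?thesis unfolding s_def sigma_j_def using True by simp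
  next
    case False then show ?thesis unfolding s_def using s0 by simp
  qed
  have xS: "x \<in> sigma_j j (edom (sf (V t \<mu>)))"
  proof (cases "0 < b $ j")
    case True
    obtain r where r: "sf (V t \<mu>) b = ereal r" using Vb by (cases "sf (V t \<mu>) b") auto
    have "sf (V t \<mu>) ((1 / b $ j) *\<^sub>R b) = ereal (1 / b $ j) * sf (V t \<mu>) b"
      using sf_scale[OF ne_V[OF t \<mu>]] True by simp
    then have "sf (V t \<mu>) ((1 / b $ j) *\<^sub>R b) < \<infinity>" using r by simp
    then show ?thesis unfolding x_def sigma_j_def edom_def using True by simp
  next
    case False then show ?thesis unfolding x_def using x0V by simp
  qed
  have lam01: "lam \<in> {0..1}" using a0 b0 abj unfolding lam_def by simp
  have eq1: "sf (Z t \<mu>) y = ereal lam * sf (U t \<mu>) s + ereal (1 - lam) * sf (V t \<mu>) x"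
    using Zy PA PB bj unfolding lam_def by simp
  have eq2: "y = lam *\<^sub>R s + (1 - lam) *\<^sub>R x"
    using ab PA PB bj unfolding lam_def by simp
  show "\<exists>lam\<in>{0..1::real}. \<exists>x\<in>sigma_j j (edom (sf (V t \<mu>))). \<exists>s\<in>sigma_j j (dualc (Q t \<mu>)).
             sf (Z t \<mu>) y = ereal lam * sf (U t \<mu>) s + ereal (1 - lam) * sf (V t \<mu>) x
           \<and> y = lam *\<^sub>R s + (1 - lam) *\<^sub>R x"
    using lam01 xS sS eq1 eq2 by blast
qed

lemma claim4a:
  assumes tT: "t < T" and \<mu>: "\<mu> \<in> F t"
  shows "Wfun Om F T rate xi t \<mu> = conv_fun (succ F t \<mu>) (\<lambda>\<nu>. Zfun Om F T rate xi (Suc t) \<nu>)"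
proof -
  have t: "t \<le> T" using tT by simp
  obtain HH where HH: "\<forall>\<nu>\<in>succ F t \<mu>. rep (HH \<nu>) (Z (Suc t) \<nu>)" using rep_W[OF tT \<mu>] by blast
  have ne0: "(\<Inter>\<nu>\<in>succ F t \<mu>. Z (Suc t) \<nu>) \<noteq> {}" using ne_W[OF t \<mu>] unfolding W_lt[OF tT] .
  have fe: "(\<lambda>\<nu>. Zfun Om F T rate xi (Suc t) \<nu>) = (\<lambda>\<nu>. sf (Z (Suc t) \<nu>))"
    by (rule ext) (simp add: Zfun_eq)
  have "conv_fun (succ F t \<mu>) (\<lambda>\<nu>. sf (Z (Suc t) \<nu>)) x = sf (W t \<mu>) x" for x
    unfolding W_lt[OF tT] by (rule conv_eq[OF succ_fin[OF tT] succ_ne[OF tT \<mu>] HH ne0])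
  then show ?thesis unfolding fe Wfun_eq by (intro ext) simp
qed

lemma claim4b:
  assumes tT: "t < T" and \<mu>: "\<mu> \<in> F t"
  shows "\<forall>x\<in>sigma_j j (edom (Wfun Om F T rate xi t \<mu>)).
           \<exists>(q :: 'w set \<Rightarrow> real) (yv :: 'w set \<Rightarrow> real^'d).
             (\<forall>\<nu>\<in>succ F t \<mu>. q \<nu> \<in> {0..1}
                 \<and> yv \<nu> \<in> sigma_j j (dual_cone (Q (Suc t) \<nu>)))
           \<and> Wfun Om F T rate xi t \<mu> x = (\<Sum>\<nu>\<in>succ F t \<mu>. ereal (q \<nu>) * Zfun Om F T rate xi (Suc t) \<nu> (yv \<nu>))
           \<and> x = (\<Sum>\<nu>\<in>succ F t \<mu>. q \<nu> *\<^sub>R yv \<nu>)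
           \<and> (\<Sum>\<nu>\<in>succ F t \<mu>. q \<nu>) = 1"
  unfolding Wfun_eq Zfun_eq dual_cone_eq
proof
  fix x assume xs: "x \<in> sigma_j j (edom (sf (W t \<mu>)))"
  have t: "t \<le> T" and st: "Suc t \<le> T" using tT by simp_all
  have x: "sf (W t \<mu>) x < \<infinity>" "x $ j = 1" using xs unfolding sigma_j_def edom_def by auto
  define I where "I = succ F t \<mu>"
  have fI: "finite I" unfolding I_def by (rule succ_fin[OF tT])
  have nF: "\<nu> \<in> F (Suc t)" if "\<nu> \<in> I" for \<nu> using that unfolding I_def by (rule succ_sub)
  obtain HH where HH: "\<forall>\<nu>\<in>I. rep (HH \<nu>) (Z (Suc t) \<nu>)" using rep_W[OF tT \<mu>] unfolding I_def by blast
  have WI: "W t \<mu> = (\<Inter>\<nu>\<in>I. Z (Suc t) \<nu>)" unfolding I_def by (rule W_lt[OF tT])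
  have ne0: "(\<Inter>\<nu>\<in>I. Z (Suc t) \<nu>) \<noteq> {}" using ne_W[OF t \<mu>] unfolding WI .
  obtain xx where xx: "(\<Sum>\<nu>\<in>I. xx \<nu>) = x"
      "\<forall>\<nu>\<in>I. sf (Z (Suc t) \<nu>) (xx \<nu>) < \<infinity> \<and> sf (Z (Suc t) \<nu>) (xx \<nu>) > -\<infinity>"
      "sf (\<Inter>\<nu>\<in>I. Z (Suc t) \<nu>) x = (\<Sum>\<nu>\<in>I. sf (Z (Suc t) \<nu>) (xx \<nu>))"
    using inf_conv_exact[OF fI _ HH ne0] x(1) succ_ne[OF tT \<mu>] unfolding WI I_def by blast
  have xQ: "xx \<nu> \<in> dualc (Q (Suc t) \<nu>)" if "\<nu> \<in> I" for \<nu>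
    using domZ[OF st nF[OF that]] xx(2) that by blast
  define q where "q \<nu> = xx \<nu> $ j" for \<nu>
  have q0: "0 \<le> q \<nu>" if "\<nu> \<in> I" for \<nu> unfolding q_def by (rule Qd_pos[OF st nF[OF that] xQ[OF that]])
  have qs: "(\<Sum>\<nu>\<in>I. q \<nu>) = 1" unfolding q_def using xx(1) x(2) by (metis sum_component)
  have q1: "q \<nu> \<le> 1" if "\<nu> \<in> I" for \<nu>
  proof -
    have "q \<nu> \<le> (\<Sum>\<nu>\<in>I. q \<nu>)" using member_le_sum[OF that, of q] q0 fI by blast
    then show ?thesis using qs by simp
  qed
  define s0 where "s0 \<nu> = (SOME s. s \<in> sigma_j j (dualc (Q (Suc t) \<nu>)))" for \<nu>
  have s0: "s0 \<nu> \<in> sigma_j j (dualc (Q (Suc t) \<nu>))" if "\<nu> \<in> I" for \<nu>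
    unfolding s0_def using sig_ne[OF st nF[OF that]] by (rule someI_ex)
  define yv where "yv \<nu> = (if 0 < xx \<nu> $ j then (1 / xx \<nu> $ j) *\<^sub>R xx \<nu> else s0 \<nu>)" for \<nu>
  have P: "ereal (q \<nu>) * sf (Z (Suc t) \<nu>) (yv \<nu>) = sf (Z (Suc t) \<nu>) (xx \<nu>) \<and> q \<nu> *\<^sub>R yv \<nu> = xx \<nu>"
    if "\<nu> \<in> I" for \<nu>
    unfolding q_def yv_def
    by (rule scale_piece[OF ne_Z[OF st nF[OF that]] q0[OF that, unfolded q_def] Qd_zero[OF st nF[OF that] xQ[OF that]]])
  have yvS: "yv \<nu> \<in> sigma_j j (dualc (Q (Suc t) \<nu>))" if "\<nu> \<in> I" for \<nu>
  proof (cases "0 < xx \<nu> $ j")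
    case True
    have "(1 / xx \<nu> $ j) *\<^sub>R xx \<nu> \<in> dualc (Q (Suc t) \<nu>)"
      using cone_scale[OF dualc_convex_cone xQ[OF that]] True by simp
    then show ?thesis unfolding yv_def sigma_j_def using True by simp
  next
    case False then show ?thesis unfolding yv_def using s0[OF that] by simp
  qed
  have e1: "sf (W t \<mu>) x = (\<Sum>\<nu>\<in>I. ereal (q \<nu>) * sf (Z (Suc t) \<nu>) (yv \<nu>))"
    unfolding WI xx(3) using P by (intro sum.cong) auto
  have e2: "x = (\<Sum>\<nu>\<in>I. q \<nu> *\<^sub>R yv \<nu>)"
    unfolding xx(1)[symmetric] using P by (intro sum.cong) auto
  show "\<exists>(q :: 'w set \<Rightarrow> real) (yv :: 'w set \<Rightarrow> real^'d).
             (\<forall>\<nu>\<in>succ F t \<mu>. q \<nu> \<in> {0..1} \<and> yv \<nu> \<in> sigma_j j (dualc (Q (Suc t) \<nu>)))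
           \<and> sf (W t \<mu>) x = (\<Sum>\<nu>\<in>succ F t \<mu>. ereal (q \<nu>) * sf (Z (Suc t) \<nu>) (yv \<nu>))
           \<and> x = (\<Sum>\<nu>\<in>succ F t \<mu>. q \<nu> *\<^sub>R yv \<nu>)
           \<and> (\<Sum>\<nu>\<in>succ F t \<mu>. q \<nu>) = 1"
    using q0 q1 yvS e1 e2 qs unfolding I_def by (intro exI[of _ q] exI[of _ yv]) auto
qed

end


theorem propositionA3:
  fixes Om :: "'w set" and F :: "nat \<Rightarrow> 'w set set" and T :: nat
    and rate :: "nat \<Rightarrow> 'w \<Rightarrow> 'd::finite \<Rightarrow> 'd \<Rightarrow> real"
    and xi :: "nat \<Rightarrow> 'w \<Rightarrow> real^'d" and j :: 'd
  assumes filt: "filtration Om F T"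
    and rates: "exchange_rates Om F T rate"
    and NA: "no_arbitrage Om F T rate"
    and opt: "american_option F T xi"
  shows
    "(\<forall>t\<le>T. \<forall>\<mu>\<in>F t. compactly_generated j (dual_cone (Qnode Om F T rate t \<mu>)))
   \<and> (\<forall>t\<le>T. \<forall>\<mu>\<in>F t. \<forall>y.
        Ufun Om F T rate xi t \<mu> y =
          (if y \<in> dual_cone (Qnode Om F T rate t \<mu>) then ereal (- (y \<bullet> atnode (xi t) \<mu>)) else \<infinity>)
      \<and> Vfun Om F T rate xi t \<mu> y =
          (if y \<in> dual_cone (Qnode Om F T rate t \<mu>) then Wfun Om F T rate xi t \<mu> y else \<infinity>))
   \<and> (\<forall>t\<le>T. \<forall>\<mu>\<in>F t. edom (Zfun Om F T rate xi t \<mu>) = dual_cone (Qnode Om F T rate t \<mu>))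
   \<and> (\<forall>t<T. \<forall>\<mu>\<in>F t.
        Zfun Om F T rate xi t \<mu> =
          conv_fun (UNIV :: bool set) (\<lambda>b. if b then Ufun Om F T rate xi t \<mu> else Vfun Om F T rate xi t \<mu>)
      \<and> (\<forall>y\<in>sigma_j j (dual_cone (Qnode Om F T rate t \<mu>)).
           \<exists>lam\<in>{0..1::real}. \<exists>x\<in>sigma_j j (edom (Vfun Om F T rate xi t \<mu>)).
           \<exists>s\<in>sigma_j j (dual_cone (Qnode Om F T rate t \<mu>)).
             Zfun Om F T rate xi t \<mu> y = ereal lam * Ufun Om F T rate xi t \<mu> s
                                     + ereal (1 - lam) * Vfun Om F T rate xi t \<mu> x
           \<and> y = lam *\<^sub>R s + (1 - lam) *\<^sub>R x))
   \<and> (\<forall>t<T. \<forall>\<mu>\<in>F t.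
        Wfun Om F T rate xi t \<mu> = conv_fun (succ F t \<mu>) (\<lambda>\<nu>. Zfun Om F T rate xi (Suc t) \<nu>)
      \<and> (\<forall>x\<in>sigma_j j (edom (Wfun Om F T rate xi t \<mu>)).
           \<exists>(q :: 'w set \<Rightarrow> real) (yv :: 'w set \<Rightarrow> real^'d).
             (\<forall>\<nu>\<in>succ F t \<mu>. q \<nu> \<in> {0..1}
                 \<and> yv \<nu> \<in> sigma_j j (dual_cone (Qnode Om F T rate (Suc t) \<nu>)))
           \<and> Wfun Om F T rate xi t \<mu> x = (\<Sum>\<nu>\<in>succ F t \<mu>. ereal (q \<nu>) * Zfun Om F T rate xi (Suc t) \<nu> (yv \<nu>))
           \<and> x = (\<Sum>\<nu>\<in>succ F t \<mu>. q \<nu> *\<^sub>R yv \<nu>)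
           \<and> (\<Sum>\<nu>\<in>succ F t \<mu>. q \<nu>) = 1))"
proof -
  interpret S: setting Om F T rate xi j using filt rates NA opt by unfold_locales
  show ?thesis
  proof (intro conjI)
    show "\<forall>t\<le>T. \<forall>\<mu>\<in>F t. compactly_generated j (dual_cone (Qnode Om F T rate t \<mu>))"
      using S.claim1 by blast
    show "\<forall>t\<le>T. \<forall>\<mu>\<in>F t. \<forall>y.
        Ufun Om F T rate xi t \<mu> y =
          (if y \<in> dual_cone (Qnode Om F T rate t \<mu>) then ereal (- (y \<bullet> atnode (xi t) \<mu>)) else \<infinity>)
      \<and> Vfun Om F T rate xi t \<mu> y =
          (if y \<in> dual_cone (Qnode Om F T rate t \<mu>) then Wfun Om F T rate xi t \<mu> y else \<infinity>)"
      using S.claim2 by blast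
    show "\<forall>t\<le>T. \<forall>\<mu>\<in>F t. edom (Zfun Om F T rate xi t \<mu>) = dual_cone (Qnode Om F T rate t \<mu>)"
      using S.claim3a by blast
    show "\<forall>t<T. \<forall>\<mu>\<in>F t.
        Zfun Om F T rate xi t \<mu> =
          conv_fun (UNIV :: bool set) (\<lambda>b. if b then Ufun Om F T rate xi t \<mu> else Vfun Om F T rate xi t \<mu>)
      \<and> (\<forall>y\<in>sigma_j j (dual_cone (Qnode Om F T rate t \<mu>)).
           \<exists>lam\<in>{0..1::real}. \<exists>x\<in>sigma_j j (edom (Vfun Om F T rate xi t \<mu>)).
           \<exists>s\<in>sigma_j j (dual_cone (Qnode Om F T rate t \<mu>)).
             Zfun Om F T rate xi t \<mu> y = ereal lam * Ufun Om F T rate xi t \<mu> s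
                                     + ereal (1 - lam) * Vfun Om F T rate xi t \<mu> x
           \<and> y = lam *\<^sub>R s + (1 - lam) *\<^sub>R x)"
      using S.claim3b S.claim3c by blast
    show "\<forall>t<T. \<forall>\<mu>\<in>F t.
        Wfun Om F T rate xi t \<mu> = conv_fun (succ F t \<mu>) (\<lambda>\<nu>. Zfun Om F T rate xi (Suc t) \<nu>)
      \<and> (\<forall>x\<in>sigma_j j (edom (Wfun Om F T rate xi t \<mu>)).
           \<exists>(q :: 'w set \<Rightarrow> real) (yv :: 'w set \<Rightarrow> real^'d).
             (\<forall>\<nu>\<in>succ F t \<mu>. q \<nu> \<in> {0..1}
                 \<and> yv \<nu> \<in> sigma_j j (dual_cone (Qnode Om F T rate (Suc t) \<nu>)))
           \<and> Wfun Om F T rate xi t \<mu> x = (\<Sum>\<nu>\<in>succ F t \<mu>. ereal (q \<nu>) * Zfun Om F T rate xi (Suc t) \<nu> (yv \<nu>))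
           \<and> x = (\<Sum>\<nu>\<in>succ F t \<mu>. q \<nu> *\<^sub>R yv \<nu>)
           \<and> (\<Sum>\<nu>\<in>succ F t \<mu>. q \<nu>) = 1)"
      using S.claim4a S.claim4b by blast
  qed
qed

end
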